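(* Let $q$ be a prime power and $n\ge 3$ an integer. The matroid $\overline{\mathrm{PG}}(n-1,q)$ is $\mathrm{GF}(q)$-regular, i.e. it is representable over every field having $\mathrm{GF}(q)$ as a proper subfield.
   Context: Let $\mathbb F$ be a field with a $\mathrm{GF}(q)$-subfield, let $A$ be a $\mathrm{GF}(q)$-matrix with $n$ rows whose columns (indexed by $E(N)$) represent $N\cong \mathrm{PG}(n-1,q)$. Let $L_0$ be a line of $N$, $v\in \mathrm{col}_{\mathbb F}(A[L_0])$ a vector not parallel to any column of $A[L_0]$, $f\in E(N)-L_0$, and $\mathcal L$ the set of lines of $N$ in $\mathrm{cl}_N(L_0\cup\{f\})$ not containing $f$. For each $L\in\mathcal L$ let $v_L$ be a nonzero vector in $\mathrm{col}_{\mathbb F}(A[L])\cap\mathrm{col}_{\mathbb F}(v\,|\,A[f])$, and let $\overline A$ be $A$ with one new column $x_L=v_L$ appended for each $L\in\mathcal L$. The matroid represented by the columns of $\overline A$ is, up to isomorphism, independent of all choices (including $\mathbb F$); $\overline{\mathrm{PG}}(n-1,q)$ denotes any matroid isomorphic to it. *)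

theory Defs
  imports "HOL-Computational_Algebra.Primes"
begin

text \<open>Vectors over a field are functions nat => 'a (coordinates indexed by rows);
  a matrix is a family of columns indexed by ground-set elements.\<close>

definition subfield :: "'a::field set \<Rightarrow> bool" where
  "subfield S \<longleftrightarrow> 0 \<in> S \<and> 1 \<in> S \<and> (\<forall>x\<in>S. \<forall>y\<in>S. x + y \<in> S \<and> x * y \<in> S)
     \<and> (\<forall>x\<in>S. - x \<in> S \<and> inverse x \<in> S)"

text \<open>Linear independence of the family of columns (V i) for i in X (repeats count as dependent).\<close>
definition lin_indep_fam :: "('i \<Rightarrow> nat \<Rightarrow> 'a::field) \<Rightarrow> 'i set \<Rightarrow> bool" where
  "lin_indep_fam V X \<longleftrightarrow> finite X \<and>
     (\<forall>c. (\<forall>j. (\<Sum>i\<in>X. c i * V i j) = 0) \<longrightarrow> (\<forall>i\<in>X. c i = 0))"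

definition vspan :: "(nat \<Rightarrow> 'a::field) set \<Rightarrow> (nat \<Rightarrow> 'a) set" where
  "vspan W = {w. \<exists>c. \<forall>j. w j = (\<Sum>u\<in>W. c u * u j)}"

definition parallel :: "(nat \<Rightarrow> 'a::field) \<Rightarrow> (nat \<Rightarrow> 'a) \<Rightarrow> bool" where
  "parallel u w \<longleftrightarrow> (\<exists>c. u = (\<lambda>j. c * w j))"

text \<open>The columns A e (e in E) form an S-matrix with n rows representing PG(n-1,|S|):
  nonzero S-vectors in S^n, pairwise non-parallel, one for every point.\<close>
definition is_PG_rep :: "'a::field set \<Rightarrow> nat \<Rightarrow> ('e \<Rightarrow> nat \<Rightarrow> 'a) \<Rightarrow> 'e set \<Rightarrow> bool" where
  "is_PG_rep S n A E \<longleftrightarrow>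
     (\<forall>e\<in>E. (\<forall>j. A e j \<in> S) \<and> (\<forall>j. n \<le> j \<longrightarrow> A e j = 0) \<and> A e \<noteq> (\<lambda>j. 0)) \<and>
     (\<forall>e\<in>E. \<forall>e'\<in>E. e \<noteq> e' \<longrightarrow> \<not> parallel (A e) (A e')) \<and>
     (\<forall>w. (\<forall>j. w j \<in> S) \<and> (\<forall>j. n \<le> j \<longrightarrow> w j = 0) \<and> w \<noteq> (\<lambda>j. 0)
          \<longrightarrow> (\<exists>e\<in>E. parallel w (A e)))"

definition mcl :: "('e \<Rightarrow> nat \<Rightarrow> 'a::field) \<Rightarrow> 'e set \<Rightarrow> 'e set \<Rightarrow> 'e set" where
  "mcl A E X = {e\<in>E. A e \<in> vspan (A ` X)}"

definition is_line :: "('e \<Rightarrow> nat \<Rightarrow> 'a::field) \<Rightarrow> 'e set \<Rightarrow> 'e set \<Rightarrow> bool" where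
  "is_line A E L \<longleftrightarrow> (\<exists>a\<in>E. \<exists>b\<in>E. a \<noteq> b \<and> L = mcl A E {a, b})"

definition lines_off :: "('e \<Rightarrow> nat \<Rightarrow> 'a::field) \<Rightarrow> 'e set \<Rightarrow> 'e set \<Rightarrow> 'e \<Rightarrow> 'e set set" where
  "lines_off A E L0 f = {L. is_line A E L \<and> L \<subseteq> mcl A E (L0 \<union> {f}) \<and> f \<notin> L}"

text \<open>Ground set and columns of the extended matrix A-bar: the old columns (Inl e)
  plus one new column x_L = v_L for each L in \<L> (Inr L).\<close>
definition pgbar_ground :: "'e set \<Rightarrow> 'e set set \<Rightarrow> ('e + 'e set) set" where
  "pgbar_ground E Ls = Inl ` E \<union> Inr ` Ls"

definition pgbar_cols :: "('e \<Rightarrow> nat \<Rightarrow> 'a) \<Rightarrow> ('e set \<Rightarrow> nat \<Rightarrow> 'a) \<Rightarrow> ('e + 'e set) \<Rightarrow> nat \<Rightarrow> 'a" where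
  "pgbar_cols A vL = case_sum A vL"

end

theory Submission
  imports Defs "HOL-Algebra.Multiplicative_Group" "HOL-Computational_Algebra.Polynomial"
begin


definition sfring :: "'a::field set \<Rightarrow> 'a ring" where
  "sfring S = \<lparr>carrier = S, monoid.mult = (\<lambda>x y. x * y), one = 1, ring.zero = 0, add = (\<lambda>x y. x + y)\<rparr>"

lemma subfield_closed:
  assumes "subfield S"
  shows "0 \<in> S" "1 \<in> S" "x \<in> S \<Longrightarrow> y \<in> S \<Longrightarrow> x + y \<in> S" "x \<in> S \<Longrightarrow> y \<in> S \<Longrightarrow> x * y \<in> S"
    "x \<in> S \<Longrightarrow> - x \<in> S" "x \<in> S \<Longrightarrow> inverse x \<in> S"
    "x \<in> S \<Longrightarrow> y \<in> S \<Longrightarrow> x - y \<in> S" "x \<in> S \<Longrightarrow> y \<in> S \<Longrightarrow> x / y \<in> S"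
  using assms unfolding subfield_def
  by (auto simp: divide_inverse) (metis diff_conv_add_uminus)

lemma sfring_field:
  assumes "subfield S"
  shows "field (sfring S)"
proof -
  note c = subfield_closed[OF assms]
  have U: "Units (sfring S) = S - {0}"
  proof
    show "Units (sfring S) \<subseteq> S - {0}"
      by (auto simp: Units_def sfring_def)
    show "S - {0} \<subseteq> Units (sfring S)"
    proof
      fix x assume x: "x \<in> S - {0}"
      then have "inverse x \<in> S" "x * inverse x = 1" "inverse x * x = 1" using c by auto
      then show "x \<in> Units (sfring S)" using x unfolding Units_def sfring_def by (auto intro!: bexI[of _ "inverse x"])
    qed
  qed
  have AU: "x \<in> S \<Longrightarrow> x \<in> Units (add_monoid (sfring S))" for x
    unfolding Units_def sfring_def
    apply simp
    apply (rule bexI[of _ "-x"])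
    using c by auto
  have cr: "cring (sfring S)"
  proof (rule cringI)
    show "abelian_group (sfring S)" apply (rule abelian_groupI) using c by (auto simp: sfring_def algebra_simps intro!: bexI[of _ "- _"])
    show "comm_monoid (sfring S)" apply (rule comm_monoidI) using c by (auto simp: sfring_def algebra_simps)
  qed (auto simp: sfring_def algebra_simps)
  show ?thesis
  proof (intro field.intro domain.intro field_axioms.intro domain_axioms.intro cr)
    show "Units (sfring S) = carrier (sfring S) - {\<zero>\<^bsub>sfring S\<^esub>}" using U by (simp add: sfring_def)
  qed (auto simp: sfring_def)
qed

lemma subfield_gen:
  assumes "subfield S" "finite S"
  shows "\<exists>a\<in>S. \<forall>s\<in>S. s \<noteq> 0 \<longrightarrow> (\<exists>k::nat. s = a ^ k)"
proof -
  have F: "field (sfring S)" by (rule sfring_field[OF assms(1)])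
  have fin: "finite (carrier (sfring S))" using assms by (simp add: sfring_def)
  have "\<exists>a\<in>carrier (mult_of (sfring S)). carrier (mult_of (sfring S)) = {a [^]\<^bsub>sfring S\<^esub> i |i::nat. i \<in> UNIV}"
    by (rule field.finite_field_mult_group_has_gen[OF F fin])
  then obtain a where a: "a \<in> carrier (mult_of (sfring S))"
    "carrier (mult_of (sfring S)) = {a [^]\<^bsub>sfring S\<^esub> i |i::nat. i \<in> UNIV}" by blast
  have pw: "a [^]\<^bsub>sfring S\<^esub> (i::nat) = a ^ i" for i
  proof (induct i)
    case 0 then show ?case by (simp add: sfring_def)
  next
    case (Suc i) then show ?case by (simp add: sfring_def mult.commute)
  qed
  have cS: "carrier (mult_of (sfring S)) = S - {0}" by (simp add: sfring_def)
  show ?thesis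
  proof (intro bexI ballI impI)
    show "a \<in> S" using a(1) cS by auto
    fix s assume "s \<in> S" "s \<noteq> 0"
    then have "s \<in> carrier (mult_of (sfring S))" using cS by auto
    then obtain i :: nat where "s = a [^]\<^bsub>sfring S\<^esub> i" using a(2) by auto
    then show "\<exists>k::nat. s = a ^ k" using pw by auto
  qed
qed


lemma subfield_sum: "subfield S \<Longrightarrow> (\<And>i. i \<in> I \<Longrightarrow> f i \<in> S) \<Longrightarrow> sum f I \<in> S"
  by (induct I rule: infinite_finite_induct) (auto intro: subfield_closed)

lemma subfield_of_nat: "subfield S \<Longrightarrow> of_nat n \<in> S"
  by (induct n) (auto intro: subfield_closed)

lemma subfield_of_int: "subfield S \<Longrightarrow> of_int z \<in> S"
  by (cases z rule: int_cases) (auto intro: subfield_closed subfield_of_nat)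

lemma subfield_pow: "subfield S \<Longrightarrow> x \<in> S \<Longrightarrow> x ^ n \<in> S"
  by (induct n) (auto intro: subfield_closed)

lemma of_nat_card_subfield:
  fixes S :: "'a::field set"
  assumes S: "subfield S" "finite S"
  shows "(of_nat (card S) :: 'a::field) = 0"
proof -
  note c = subfield_closed[OF S(1)]
  let ?g = "\<lambda>s::'a. s + 1"
  have inj: "inj_on ?g S" by (auto simp: inj_on_def)
  have "?g ` S \<subseteq> S" using c by auto
  moreover have "card (?g ` S) = card S" using card_image[OF inj] .
  ultimately have img: "?g ` S = S" using S(2) by (simp add: card_subset_eq)
  have "sum (\<lambda>s. s) S = sum (\<lambda>s. s) (?g ` S)" using img by simp
  also have "\<dots> = sum (\<lambda>s. s + 1) S" using sum.reindex[OF inj] by simp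
  also have "\<dots> = sum (\<lambda>s. s) S + of_nat (card S)" by (simp add: sum.distrib)
  finally show ?thesis by simp
qed

lemma pow_card_subfield:
  fixes S :: "'a::field set"
  assumes S: "subfield S" "finite S" and s: "s \<in> S"
  shows "s ^ card S = (s::'a::field)"
proof (cases "s = 0")
  case True
  have "card S \<noteq> 0" using S s by auto
  then show ?thesis using True by simp
next
  case False
  note c = subfield_closed[OF S(1)]
  let ?S = "S - {0}"
  let ?g = "\<lambda>x. s * x"
  have inj: "inj_on ?g ?S" using False by (auto simp: inj_on_def)
  have "?g ` ?S \<subseteq> ?S" using c s False by auto
  moreover have "card (?g ` ?S) = card ?S" using card_image[OF inj] .
  ultimately have img: "?g ` ?S = ?S" using S(2) by (simp add: card_subset_eq)
  have "prod (\<lambda>x. x) ?S = prod (\<lambda>x. x) (?g ` ?S)" using img by simp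
  also have "\<dots> = prod (\<lambda>x. s * x) ?S" using prod.reindex[OF inj] by simp
  also have "\<dots> = s ^ card ?S * prod (\<lambda>x. x) ?S" by (simp add: prod.distrib)
  finally have "s ^ card ?S = 1"
    using S(2) by (simp add: prod_zero_iff)
  moreover have "card S = Suc (card ?S)" using S c
    by (metis card_Suc_Diff1)
  ultimately show ?thesis by simp
qed

definition evi :: "int poly \<Rightarrow> 'a::field \<Rightarrow> 'a" where
  "evi g x = poly (map_poly of_int g) x"

lemma map_poly_of_int_add: "map_poly of_int (f + g) = (map_poly of_int f + map_poly of_int g :: 'a::comm_ring_1 poly)"
  by (intro poly_eqI) (simp add: coeff_map_poly)

lemma map_poly_of_int_diff: "map_poly of_int (f - g) = (map_poly of_int f - map_poly of_int g :: 'a::comm_ring_1 poly)"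
  by (intro poly_eqI) (simp add: coeff_map_poly)

lemma map_poly_of_int_mult: "map_poly of_int (f * g) = (map_poly of_int f * map_poly of_int g :: 'a::comm_ring_1 poly)"
  by (intro poly_eqI) (simp add: coeff_map_poly coeff_mult of_int_sum)

lemma evi_add: "evi (f + g) x = evi f x + evi g x"
  by (simp add: evi_def map_poly_of_int_add)
lemma evi_diff: "evi (f - g) x = evi f x - evi g x"
  by (simp add: evi_def map_poly_of_int_diff)
lemma evi_mult: "evi (f * g) x = evi f x * evi g x"
  by (simp add: evi_def map_poly_of_int_mult)
lemma evi_monom: "evi (monom c n) x = of_int c * x ^ n"
  by (simp add: evi_def map_poly_monom poly_monom)
lemma evi_smult: "evi (smult c f) x = of_int c * evi f x"
  by (simp add: evi_def map_poly_smult)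
lemma evi_0[simp]: "evi 0 x = 0" by (simp add: evi_def)
lemma evi_1[simp]: "evi 1 x = 1" by (simp add: evi_def)
lemma evi_pCons: "evi (pCons a g) x = of_int a + x * evi g x"
  by (simp add: evi_def map_poly_pCons)

lemma evi_in: "subfield S \<Longrightarrow> x \<in> S \<Longrightarrow> evi g x \<in> S"
  by (induct g rule: pCons_induct) (auto simp: evi_pCons intro!: subfield_closed subfield_of_int)

lemma evi_char0:
  assumes "(of_nat p :: 'a::field) = 0" "\<forall>i. int p dvd coeff r i"
  shows "evi r (x::'a) = 0"
proof -
  have "map_poly (of_int :: int \<Rightarrow> 'a) r = 0"
  proof (intro poly_eqI)
    fix i
    obtain z where "coeff r i = int p * z" using assms(2) by (meson dvdE)
    then show "coeff (map_poly (of_int :: int \<Rightarrow> 'a) r) i = coeff 0 i"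
      using assms(1) by (simp add: coeff_map_poly)
  qed
  then show ?thesis by (simp add: evi_def)
qed


lemma deg_lt_or_zero:
  fixes r :: "'a::zero poly"
  assumes "degree r \<le> d" "coeff r d = 0"
  shows "r = 0 \<or> degree r < d"
proof (rule ccontr)
  assume "\<not> (r = 0 \<or> degree r < d)"
  then have "r \<noteq> 0" "degree r = d" using assms by auto
  then show False using assms(2) by (metis leading_coeff_0_iff)
qed

lemma monic_div:
  fixes g m :: "int poly"
  assumes "lead_coeff m = 1"
  shows "\<exists>h r. g = m * h + r \<and> (r = 0 \<or> degree r < degree m)"
proof -
  have m0: "m \<noteq> 0" using assms by auto
  obtain h r where hr: "pseudo_divmod g m = (h, r)" by (cases "pseudo_divmod g m")
  from pseudo_divmod[OF m0 hr] assms show ?thesis by auto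
qed

lemma finite_subfield_iso:
  fixes S :: "'a::field set" and T :: "'b::field set"
  assumes S: "subfield S" "card S = q" and T: "subfield T" "card T = q"
    and q: "prime p" "q = p ^ k" "0 < k"
  shows "\<exists>\<sigma>. bij_betw \<sigma> S T \<and> \<sigma> 1 = 1 \<and>
    (\<forall>x\<in>S. \<forall>y\<in>S. \<sigma> (x + y) = \<sigma> x + \<sigma> y \<and> \<sigma> (x * y) = \<sigma> x * \<sigma> y)"
proof -
  have p2: "p \<ge> 2" using q(1) by (rule prime_ge_2_nat)
  have "p ^ 1 \<le> p ^ k" using q(3) p2 by (intro power_increasing) auto
  then have q2: "q \<ge> 2" using p2 q(2) by simp
  have finS: "finite S" using S(2) q2 by (metis card.infinite not_numeral_le_zero)
  have finT: "finite T" using T(2) q2 by (metis card.infinite not_numeral_le_zero)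
  have chA: "(of_nat p :: 'a) = 0"
  proof -
    have "(of_nat q :: 'a) = 0" using of_nat_card_subfield[OF S(1) finS] S(2) by simp
    then have "(of_nat p :: 'a) ^ k = 0" using q(2) by (simp add: of_nat_power)
    then show ?thesis by simp
  qed
  have chB: "(of_nat p :: 'b) = 0"
  proof -
    have "(of_nat q :: 'b) = 0" using of_nat_card_subfield[OF T(1) finT] T(2) by simp
    then have "(of_nat p :: 'b) ^ k = 0" using q(2) by (simp add: of_nat_power)
    then show ?thesis by simp
  qed
  have ofintA: "int p dvd z \<Longrightarrow> (of_int z :: 'a) = 0" for z
    using chA by (auto elim!: dvdE)
  have ofintB: "int p dvd z \<Longrightarrow> (of_int z :: 'b) = 0" for z
    using chB by (auto elim!: dvdE)
  obtain \<alpha> where \<alpha>: "\<alpha> \<in> S" "\<And>s. s \<in> S \<Longrightarrow> s \<noteq> 0 \<Longrightarrow> \<exists>k::nat. s = \<alpha> ^ k"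
    using subfield_gen[OF S(1) finS] by blast
  define M0 :: "int poly" where "M0 = monom 1 q - monom 1 1"
  have cM0: "coeff M0 q = 1" "\<And>i. i > q \<Longrightarrow> coeff M0 i = 0"
    using q2 by (auto simp: M0_def coeff_monom)
  have dM0: "degree M0 = q"
  proof (rule antisym)
    show "degree M0 \<le> q" using cM0(2) by (meson degree_le not_le_imp_less)
    show "q \<le> degree M0" using cM0(1) by (intro le_degree) simp
  qed
  have lM0: "lead_coeff M0 = 1" using dM0 cM0 by simp
  have eM0: "evi M0 x = x ^ q - x" for x :: "'a"
    by (simp add: M0_def evi_diff evi_monom)
  have eMB: "evi M0 x = x ^ q - x" for x :: "'b"
    by (simp add: M0_def evi_diff evi_monom)
  define P where "P d \<longleftrightarrow> (\<exists>m. lead_coeff m = 1 \<and> degree m = d \<and> evi m \<alpha> = 0)" for d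
  have Pq: "P q" unfolding P_def
  proof (intro exI[of _ M0] conjI)
    show "evi M0 \<alpha> = 0" using eM0 pow_card_subfield[OF S(1) finS \<alpha>(1)] S(2) by simp
  qed (use lM0 dM0 in auto)
  define d0 where "d0 = (LEAST d. P d)"
  have Pd0: "P d0" unfolding d0_def using Pq by (rule LeastI)
  have d0q: "d0 \<le> q" unfolding d0_def using Pq by (rule Least_le)
  have d0min: "d < d0 \<Longrightarrow> \<not> P d" for d unfolding d0_def by (rule not_less_Least)
  obtain m where m: "lead_coeff m = 1" "degree m = d0" "evi m \<alpha> = 0"
    using Pd0 unfolding P_def by blast
  have d0pos: "d0 > 0"
  proof (rule ccontr)
    assume "\<not> d0 > 0"
    then have "degree m = 0" using m by simp
    then have "m = 1" using m(1)
      by (intro poly_eqI) (auto simp: coeff_1 coeff_eq_0)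
    then show False using m(3) by simp
  qed
  have RED: "\<forall>r. (r = 0 \<or> degree r < j) \<longrightarrow> evi r \<alpha> = 0 \<longrightarrow> degree r < d0 \<longrightarrow>
      (\<forall>i. int p dvd coeff r i)" for j
  proof (induct j)
    case 0 then show ?case by auto
  next
    case (Suc j)
    show ?case
    proof (intro allI impI)
      fix r :: "int poly" and i
      assume r: "r = 0 \<or> degree r < Suc j" "evi r \<alpha> = 0" "degree r < d0"
      show "int p dvd coeff r i"
      proof (cases "r = 0")
        case True then show ?thesis by simp
      next
        case False
        define c where "c = lead_coeff r"
        define d where "d = degree r"
        show ?thesis
        proof (cases "int p dvd c")
          case True
          define r2 where "r2 = r - monom c d"
          have "degree r2 \<le> d" unfolding r2_def d_def
            by (intro degree_diff_le) (auto intro: degree_monom_le)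
          moreover have "coeff r2 d = 0" by (simp add: r2_def c_def d_def)
          ultimately have r2d: "r2 = 0 \<or> degree r2 < d" by (rule deg_lt_or_zero)
          have "evi r2 \<alpha> = 0" using r(2) ofintA[OF True]
            by (simp add: r2_def evi_diff evi_monom)
          then have "\<forall>i. int p dvd coeff r2 i"
            using Suc[rule_format, of r2] r2d r d_def False by auto
          then have "int p dvd coeff r2 i + coeff (monom c d) i"
            using True by (auto simp: coeff_monom)
          then show ?thesis by (simp add: r2_def)
        next
          case False
          have cop: "coprime c (int p)"
            using False q(1) by (metis coprime_commute prime_imp_coprime_int prime_nat_int_transfer)
          obtain u v where uv: "u * c + v * int p = 1"
            using bezout_int[of c "int p"] cop by auto
          define m2 where "m2 = smult u r + monom (1 - u * c) d"
          have "degree m2 \<le> d" unfolding m2_def d_def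
            by (intro degree_add_le) (auto intro: degree_monom_le order.trans[OF degree_smult_le])
          moreover have cm2: "coeff m2 d = 1" by (simp add: m2_def c_def d_def)
          ultimately have dm2: "degree m2 = d"
            by (metis antisym le_degree one_neq_zero)
          have "1 - u * c = v * int p" using uv by simp
          then have "(of_int (1 - u * c) :: 'a) = 0" using chA by simp
          then have "evi m2 \<alpha> = 0" using r(2) by (simp add: m2_def evi_add evi_smult evi_monom)
          then have "P d" unfolding P_def using dm2 cm2 by auto
          then show ?thesis using d0min r(3) d_def by auto
        qed
      qed
    qed
  qed
  have RED': "evi r \<alpha> = 0 \<Longrightarrow> (r = 0 \<or> degree r < d0) \<Longrightarrow> \<forall>i. int p dvd coeff r i" for r
    using RED[of "Suc (degree r)"] by auto
  obtain h r where hr: "M0 = m * h + r" "r = 0 \<or> degree r < d0"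
    using monic_div[OF m(1), of M0] m(2) by auto
  have er0: "evi r \<alpha> = 0"
  proof -
    have "evi M0 \<alpha> = 0" using eM0 pow_card_subfield[OF S(1) finS \<alpha>(1)] S(2) by simp
    then show ?thesis using hr(1) m(3) by (simp add: evi_add evi_mult)
  qed
  have erB: "evi r (x::'b) = 0" for x
    using evi_char0[OF chB] RED'[OF er0 hr(2)] by blast
  have h0: "h \<noteq> 0"
  proof
    assume "h = 0"
    then have "M0 = r" using hr by simp
    then show False using hr(2) dM0 d0q lM0 by auto
  qed
  have dmh: "degree (m * h) = d0 + degree h"
    using degree_mult_eq[of m h] h0 m by (metis leading_coeff_0_iff one_neq_zero)
  have "degree r < degree (m * h)" if "r \<noteq> 0" using hr(2) that dmh by auto
  have dM0': "degree M0 = degree (m * h)"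
  proof (cases "r = 0")
    case True then show ?thesis using hr by simp
  next
    case False
    then have "degree r < degree (m * h)" using hr(2) dmh by auto
    then show ?thesis using hr(1) by (simp add: degree_add_eq_left)
  qed
  have lh: "lead_coeff h = 1"
  proof -
    have "coeff M0 q = coeff (m * h) (d0 + degree h) + coeff r (d0 + degree h)"
      using hr(1) dM0 dM0' dmh by simp
    moreover have "coeff r (d0 + degree h) = 0"
      using hr(2) by (auto intro: coeff_eq_0)
    moreover have "coeff (m * h) (d0 + degree h) = lead_coeff h"
      using coeff_mult_degree_sum[of m h] m by simp
    ultimately show ?thesis using cM0 by simp
  qed
  have dh: "degree h < q" using dM0 dM0' dmh d0pos by simp
  obtain \<beta> where \<beta>: "\<beta> \<in> T" "evi m \<beta> = 0"
  proof -
    have "\<exists>\<beta>\<in>T. evi m \<beta> = 0"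
    proof (rule ccontr)
      assume nr: "\<not> (\<exists>\<beta>\<in>T. evi m \<beta> = 0)"
      let ?h = "map_poly (of_int :: int \<Rightarrow> 'b) h"
      have ch: "coeff ?h (degree h) = 1" using lh by (simp add: coeff_map_poly)
      then have h'0: "?h \<noteq> 0" by auto
      have "degree ?h \<le> degree h" by (rule map_poly_degree_leq)
      have sub: "T \<subseteq> {x. poly ?h x = 0}"
      proof
        fix t assume t: "t \<in> T"
        have "evi M0 t = 0" using eMB pow_card_subfield[OF T(1) finT t] T(2) by simp
        then have "evi m t * evi h t = 0" using hr(1) erB by (simp add: evi_add evi_mult)
        then have "evi h t = 0" using nr t by auto
        then show "t \<in> {x. poly ?h x = 0}" by (simp add: evi_def)
      qed
      have "card T \<le> card {x. poly ?h x = 0}"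
        using card_mono[OF poly_roots_finite[OF h'0] sub] .
      also have "\<dots> \<le> degree ?h" by (rule card_poly_roots_bound[OF h'0])
      also have "\<dots> \<le> degree h" by (rule map_poly_degree_leq)
      finally show False using dh T(2) by simp
    qed
    then show ?thesis using that by blast
  qed
  have KER: "evi g \<alpha> = 0 \<Longrightarrow> evi g \<beta> = 0" for g
  proof -
    assume g: "evi g \<alpha> = 0"
    obtain h2 r2 where hr2: "g = m * h2 + r2" "r2 = 0 \<or> degree r2 < d0"
      using monic_div[OF m(1), of g] m(2) by auto
    have "evi r2 \<alpha> = 0" using g hr2(1) m(3) by (simp add: evi_add evi_mult)
    then have "evi r2 \<beta> = 0" using evi_char0[OF chB] RED'[OF _ hr2(2)] by blast
    then show "evi g \<beta> = 0" using hr2(1) \<beta>(2) by (simp add: evi_add evi_mult)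
  qed
  have rep: "\<exists>g. evi g \<alpha> = s" if sS: "s \<in> S" for s
  proof (cases "s = 0")
    case True then show ?thesis by (intro exI[of _ 0]) simp
  next
    case False
    then obtain k where "s = \<alpha> ^ k" using \<alpha>(2) sS by blast
    then show ?thesis by (intro exI[of _ "monom 1 k"]) (simp add: evi_monom)
  qed
  define \<sigma> where "\<sigma> s = evi (SOME g. evi g \<alpha> = s) \<beta>" for s
  have wd: "\<sigma> s = evi g \<beta>" if "evi g \<alpha> = s" for g s
  proof -
    have ex: "\<exists>g. evi g \<alpha> = s" using that by blast
    define g0 where "g0 = (SOME g. evi g \<alpha> = s)"
    have "evi g0 \<alpha> = s" unfolding g0_def using someI_ex[OF ex] .
    then have "evi (g0 - g) \<alpha> = 0" using that by (simp add: evi_diff)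
    then have "evi (g0 - g) \<beta> = 0" by (rule KER)
    then show ?thesis by (simp add: \<sigma>_def g0_def[symmetric] evi_diff)
  qed
  have s1: "\<sigma> 1 = 1" using wd[of 1 1] by simp
  have sadd: "\<sigma> (x + y) = \<sigma> x + \<sigma> y" if xyS: "x \<in> S" "y \<in> S" for x y
  proof -
    obtain gx gy where "evi gx \<alpha> = x" "evi gy \<alpha> = y" using rep xyS by blast
    then show ?thesis using wd[of gx x] wd[of gy y] wd[of "gx + gy" "x + y"] by (simp add: evi_add)
  qed
  have smult: "\<sigma> (x * y) = \<sigma> x * \<sigma> y" if xyS: "x \<in> S" "y \<in> S" for x y
  proof -
    obtain gx gy where "evi gx \<alpha> = x" "evi gy \<alpha> = y" using rep xyS by blast
    then show ?thesis using wd[of gx x] wd[of gy y] wd[of "gx * gy" "x * y"] by (simp add: evi_mult)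
  qed
  have sT: "\<sigma> x \<in> T" if xS: "x \<in> S" for x
  proof -
    obtain gx where "evi gx \<alpha> = x" using rep xS by blast
    then show ?thesis using wd evi_in[OF T(1) \<beta>(1)] by metis
  qed
  note cS = subfield_closed[OF S(1)]
  have inj: "inj_on \<sigma> S"
  proof (rule inj_onI)
    fix x y assume xy: "x \<in> S" "y \<in> S" "\<sigma> x = \<sigma> y"
    define z where "z = x - y"
    have z: "z \<in> S" using xy cS by (simp add: z_def)
    have "\<sigma> x = \<sigma> y + \<sigma> z" using sadd[OF xy(2) z] by (simp add: z_def)
    then have sz: "\<sigma> z = 0" using xy by simp
    show "x = y"
    proof (rule ccontr)
      assume "x \<noteq> y"
      then have "z \<noteq> 0" by (simp add: z_def)
      then have "\<sigma> (z * inverse z) = 1" using s1 by simp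
      then have "\<sigma> z * \<sigma> (inverse z) = 1" using smult[OF z] cS z by simp
      then show False using sz by simp
    qed
  qed
  have "\<sigma> ` S = T"
  proof (rule card_subset_eq[OF finT])
    show "\<sigma> ` S \<subseteq> T" using sT by auto
    show "card (\<sigma> ` S) = card T" using card_image[OF inj] S(2) T(2) by simp
  qed
  then have "bij_betw \<sigma> S T" using inj by (simp add: bij_betw_def)
  then show ?thesis using s1 sadd smult by blast
qed


lemma vspan_iff: "w \<in> vspan W \<longleftrightarrow> (\<exists>c. \<forall>j. w j = (\<Sum>u\<in>W. c u * u j))"
  by (simp add: vspan_def)

lemma vspan_zero: "(\<lambda>j. 0) \<in> vspan W"
  unfolding vspan_iff by (intro exI[of _ "\<lambda>_. 0"]) simp

lemma vspan_lin: "x \<in> vspan W \<Longrightarrow> y \<in> vspan W \<Longrightarrow> (\<lambda>j. a * x j + b * y j) \<in> vspan W"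
proof -
  assume "x \<in> vspan W" "y \<in> vspan W"
  then obtain c d where c: "\<forall>j. x j = (\<Sum>u\<in>W. c u * u j)" and d: "\<forall>j. y j = (\<Sum>u\<in>W. d u * u j)"
    unfolding vspan_iff by blast
  show ?thesis unfolding vspan_iff
    by (intro exI[of _ "\<lambda>u. a * c u + b * d u"])
      (simp add: c d sum_distrib_left sum.distrib algebra_simps)
qed

lemma vspan_smult: "x \<in> vspan W \<Longrightarrow> (\<lambda>j. a * x j) \<in> vspan W"
  using vspan_lin[of x W x a 0] by simp

lemma vspan_add: "x \<in> vspan W \<Longrightarrow> y \<in> vspan W \<Longrightarrow> (\<lambda>j. x j + y j) \<in> vspan W"
  using vspan_lin[of x W y 1 1] by simp

lemma vspan_diff: "x \<in> vspan W \<Longrightarrow> y \<in> vspan W \<Longrightarrow> (\<lambda>j. x j - y j) \<in> vspan W"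
  using vspan_lin[of x W y 1 "-1"] by simp

lemma vspan_mem: "finite W \<Longrightarrow> w \<in> W \<Longrightarrow> w \<in> vspan W"
proof -
  assume W: "finite W" "w \<in> W"
  have "\<forall>j. w j = (\<Sum>u\<in>W. (if u = w then 1 else 0) * u j)"
  proof
    fix j
    have "(\<Sum>u\<in>W. (if u = w then 1 else 0) * u j) = (\<Sum>u\<in>W. if u = w then u j else 0)"
      by (intro sum.cong) auto
    also have "\<dots> = w j" using W by (simp add: sum.delta)
    finally show "w j = (\<Sum>u\<in>W. (if u = w then 1 else 0) * u j)" by simp
  qed
  then show ?thesis unfolding vspan_iff by (rule exI[of _ "\<lambda>u. if u = w then 1 else 0"])
qed

lemma vspan_empty: "w \<in> vspan {} \<longleftrightarrow> w = (\<lambda>j. 0)"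
  by (auto simp: vspan_iff)

lemma vspan_insert:
  assumes "finite W"
  shows "w \<in> vspan (insert x W) \<longleftrightarrow> (\<exists>a. (\<lambda>j. w j - a * x j) \<in> vspan W)"
proof (cases "x \<in> W")
  case True
  then have xW: "x \<in> vspan W" using vspan_mem assms by blast
  show ?thesis
  proof
    assume "w \<in> vspan (insert x W)"
    then have "w \<in> vspan W" using True by (simp add: insert_absorb)
    then show "\<exists>a. (\<lambda>j. w j - a * x j) \<in> vspan W" by (intro exI[of _ 0]) simp
  next
    assume "\<exists>a. (\<lambda>j. w j - a * x j) \<in> vspan W"
    then obtain a where "(\<lambda>j. w j - a * x j) \<in> vspan W" by blast
    from vspan_lin[OF this xW, of 1 a] have "w \<in> vspan W" by simp
    then show "w \<in> vspan (insert x W)" using True by (simp add: insert_absorb)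
  qed
next
  case False
  show ?thesis
  proof
    assume "w \<in> vspan (insert x W)"
    then obtain c where c: "\<forall>j. w j = (\<Sum>u\<in>insert x W. c u * u j)" unfolding vspan_iff by blast
    have "\<forall>j. w j - c x * x j = (\<Sum>u\<in>W. c u * u j)" using c False assms by simp
    then show "\<exists>a. (\<lambda>j. w j - a * x j) \<in> vspan W" unfolding vspan_iff by blast
  next
    assume "\<exists>a. (\<lambda>j. w j - a * x j) \<in> vspan W"
    then obtain a c where c: "\<forall>j. w j - a * x j = (\<Sum>u\<in>W. c u * u j)" unfolding vspan_iff by blast
    have "\<forall>j. w j = (\<Sum>u\<in>insert x W. (c(x := a)) u * u j)"
    proof
      fix j
      have "(\<Sum>u\<in>W. (c(x := a)) u * u j) = (\<Sum>u\<in>W. c u * u j)"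
        using False by (intro sum.cong) auto
      then show "w j = (\<Sum>u\<in>insert x W. (c(x := a)) u * u j)"
        using c[rule_format, of j] False assms by (simp add: algebra_simps)
    qed
    then show "w \<in> vspan (insert x W)" unfolding vspan_iff by (rule exI[of _ "c(x := a)"])
  qed
qed

lemma vspan_two: "w \<in> vspan {x, y} \<longleftrightarrow> (\<exists>a b. \<forall>j. w j = a * x j + b * y j)"
proof -
  have "w \<in> vspan {x, y} \<longleftrightarrow> (\<exists>a b. (\<lambda>j. w j - a * x j - b * y j) = (\<lambda>j. 0))"
    by (simp add: vspan_insert vspan_empty)
  also have "\<dots> \<longleftrightarrow> (\<exists>a b. \<forall>j. w j = a * x j + b * y j)"
    by (simp add: fun_eq_iff algebra_simps)
  finally show ?thesis .
qed

lemma vspan_three: "w \<in> vspan {x, y, z} \<longleftrightarrow> (\<exists>a b c. \<forall>j. w j = a * x j + b * y j + c * z j)"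
proof -
  have "w \<in> vspan {x, y, z} \<longleftrightarrow> (\<exists>a b c. (\<lambda>j. w j - a * x j - b * y j - c * z j) = (\<lambda>j. 0))"
    by (simp add: vspan_insert vspan_empty)
  also have "\<dots> \<longleftrightarrow> (\<exists>a b c. \<forall>j. w j = a * x j + b * y j + c * z j)"
    by (simp add: fun_eq_iff algebra_simps)
  finally show ?thesis .
qed

lemma vspan_sum:
  assumes "finite I" "\<And>i. i \<in> I \<Longrightarrow> u i \<in> vspan W"
  shows "(\<lambda>j. \<Sum>i\<in>I. c i * u i j) \<in> vspan W"
  using assms
proof (induct I rule: finite_induct)
  case empty then show ?case by (simp add: vspan_zero)
next
  case (insert i I)
  have "(\<lambda>j. 1 * (c i * u i j) + 1 * (\<Sum>i\<in>I. c i * u i j)) \<in> vspan W"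
    using insert by (intro vspan_lin vspan_smult) auto
  then show ?case using insert by simp
qed

lemma vspan_trans:
  assumes "finite W" "W \<subseteq> vspan W'"
  shows "vspan W \<subseteq> vspan W'"
proof
  fix w assume "w \<in> vspan W"
  then obtain c where c: "\<forall>j. w j = (\<Sum>u\<in>W. c u * u j)" unfolding vspan_iff by blast
  have "(\<lambda>j. \<Sum>u\<in>W. c u * u j) \<in> vspan W'"
    using assms by (intro vspan_sum) auto
  moreover have "w = (\<lambda>j. \<Sum>u\<in>W. c u * u j)" using c by auto
  ultimately show "w \<in> vspan W'" by simp
qed

lemma vspan_image:
  assumes "inj_on A Y"
  shows "w \<in> vspan (A ` Y) \<longleftrightarrow> (\<exists>c. \<forall>j. w j = (\<Sum>y\<in>Y. c y * A y j))"
proof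
  assume "w \<in> vspan (A ` Y)"
  then obtain c where c: "\<forall>j. w j = (\<Sum>u\<in>A ` Y. c u * u j)" unfolding vspan_iff by blast
  have "\<forall>j. w j = (\<Sum>y\<in>Y. c (A y) * A y j)"
  proof
    fix j show "w j = (\<Sum>y\<in>Y. c (A y) * A y j)"
      using c sum.reindex[OF assms, of "\<lambda>u. c u * u j"] by simp
  qed
  then show "\<exists>c. \<forall>j. w j = (\<Sum>y\<in>Y. c y * A y j)" by (rule exI[of _ "\<lambda>y. c (A y)"])
next
  assume "\<exists>c. \<forall>j. w j = (\<Sum>y\<in>Y. c y * A y j)"
  then obtain c where c: "\<forall>j. w j = (\<Sum>y\<in>Y. c y * A y j)" by blast
  have "\<forall>j. w j = (\<Sum>u\<in>A ` Y. c (inv_into Y A u) * u j)"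
  proof
    fix j show "w j = (\<Sum>u\<in>A ` Y. c (inv_into Y A u) * u j)"
      using c sum.reindex[OF assms, of "\<lambda>u. c (inv_into Y A u) * u j"] assms by simp
  qed
  then show "w \<in> vspan (A ` Y)" unfolding vspan_iff by (rule exI[of _ "\<lambda>u. c (inv_into Y A u)"])
qed

lemma dep_iff:
  "\<not> lin_indep_fam u X \<longleftrightarrow> (finite X \<longrightarrow> (\<exists>c. (\<forall>j. (\<Sum>i\<in>X. c i * u i j) = 0) \<and> (\<exists>i\<in>X. c i \<noteq> 0)))"
  unfolding lin_indep_fam_def by blast

lemma dep_mono:
  assumes "X' \<subseteq> X" "finite X" "\<forall>j. (\<Sum>i\<in>X'. c i * u i j) = 0" "i0 \<in> X'" "c i0 \<noteq> 0"
  shows "\<not> lin_indep_fam u X"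
proof -
  define c' where "c' i = (if i \<in> X' then c i else 0)" for i
  have "\<forall>j. (\<Sum>i\<in>X. c' i * u i j) = 0"
  proof
    fix j
    have "(\<Sum>i\<in>X. c' i * u i j) = (\<Sum>i\<in>X'. c' i * u i j)"
      using assms(1,2) by (intro sum.mono_neutral_right) (auto simp: c'_def)
    also have "\<dots> = (\<Sum>i\<in>X'. c i * u i j)" by (intro sum.cong) (auto simp: c'_def)
    finally show "(\<Sum>i\<in>X. c' i * u i j) = 0" using assms(3) by simp
  qed
  moreover have "c' i0 \<noteq> 0" "i0 \<in> X" using assms by (auto simp: c'_def)
  ultimately show ?thesis unfolding dep_iff by blast
qed

lemma dep_sub:
  assumes "X' \<subseteq> X" "finite X" "\<not> lin_indep_fam u X'"
  shows "\<not> lin_indep_fam u X"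
proof -
  have "finite X'" using assms finite_subset by blast
  then obtain c i0 where "\<forall>j. (\<Sum>i\<in>X'. c i * u i j) = 0" "i0 \<in> X'" "c i0 \<noteq> 0"
    using assms(3) unfolding dep_iff by blast
  then show ?thesis using dep_mono[OF assms(1,2)] by blast
qed


lemma rational_dep:
  fixes u :: "'i \<Rightarrow> nat \<Rightarrow> 'a::field"
  assumes S: "subfield S" and I: "finite I" "i0 \<in> I" and uS: "\<forall>i\<in>I. \<forall>j. u i j \<in> S"
    and rel: "\<forall>j. (\<Sum>i\<in>I. c i * u i j) = 0" and c0: "c i0 \<noteq> 0"
  shows "\<exists>d. (\<forall>i. d i \<in> S) \<and> (\<forall>j. (\<Sum>i\<in>I. d i * u i j) = 0) \<and> d i0 \<noteq> 0"
  using I uS rel c0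
proof (induct "card I" arbitrary: I c u rule: less_induct)
  case less
  note cS = subfield_closed[OF S]
  show ?case
  proof (cases "\<forall>i\<in>I - {i0}. \<forall>j. u i j = 0")
    case True
    have "\<forall>j. (\<Sum>i\<in>I. c i * u i j) = c i0 * u i0 j"
    proof
      fix j
      have "(\<Sum>i\<in>I. c i * u i j) = c i0 * u i0 j + (\<Sum>i\<in>I - {i0}. c i * u i j)"
        using less by (simp add: sum.remove)
      also have "(\<Sum>i\<in>I - {i0}. c i * u i j) = 0" using True by simp
      finally show "(\<Sum>i\<in>I. c i * u i j) = c i0 * u i0 j" by simp
    qed
    then have u0: "\<forall>j. u i0 j = 0" using less by simp
    define d where "d i = (if i = i0 then (1::'a) else 0)" for i
    have "\<forall>j. (\<Sum>i\<in>I. d i * u i j) = 0"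
    proof
      fix j
      have "(\<Sum>i\<in>I. d i * u i j) = d i0 * u i0 j + (\<Sum>i\<in>I - {i0}. d i * u i j)"
        using less by (simp add: sum.remove)
      then show "(\<Sum>i\<in>I. d i * u i j) = 0" using u0 by (simp add: d_def)
    qed
    moreover have "\<forall>i. d i \<in> S" using cS by (simp add: d_def)
    ultimately show ?thesis by (intro exI[of _ d]) (simp add: d_def)
  next
    case False
    then obtain i1 k where i1: "i1 \<in> I" "i1 \<noteq> i0" and k: "u i1 k \<noteq> 0" by blast
    define I' where "I' = I - {i1}"
    define u' where "u' i j = u i j - (u i k / u i1 k) * u i1 j" for i j
    have fI': "finite I'" using less by (simp add: I'_def)
    have cI': "card I' < card I" unfolding I'_def using less(2) i1(1) by (rule card_Diff1_less)
    have i0I': "i0 \<in> I'" using less i1 by (simp add: I'_def)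
    have u'S: "\<forall>i\<in>I'. \<forall>j. u' i j \<in> S"
      using less i1 by (auto simp: I'_def u'_def intro!: cS)
    have split: "(\<Sum>i\<in>I. f i) = f i1 + (\<Sum>i\<in>I'. f i)" for f :: "'i \<Rightarrow> 'a"
      unfolding I'_def using less(2) i1(1) by (rule sum.remove)
    define \<gamma> where "\<gamma> = (\<Sum>i\<in>I'. c i * (u i k / u i1 k))"
    have eq: "(\<Sum>i\<in>I'. c i * u' i j) = - (c i1 + \<gamma>) * u i1 j" for j
    proof -
      have "(\<Sum>i\<in>I'. c i * u' i j) = (\<Sum>i\<in>I'. (c i * u i j - (c i * (u i k / u i1 k)) * u i1 j))"
        by (intro sum.cong) (auto simp: u'_def algebra_simps)
      also have "\<dots> = (\<Sum>i\<in>I'. c i * u i j) - \<gamma> * u i1 j"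
        by (simp add: sum_subtractf \<gamma>_def sum_distrib_right)
      finally have A: "(\<Sum>i\<in>I'. c i * u' i j) = (\<Sum>i\<in>I'. c i * u i j) - \<gamma> * u i1 j" .
      have B: "(\<Sum>i\<in>I'. c i * u i j) = - c i1 * u i1 j"
        using less(5) split[of "\<lambda>i. c i * u i j"] by (simp add: eq_neg_iff_add_eq_0 add.commute)
      show ?thesis unfolding A B by (simp add: algebra_simps)
    qed
    have "(\<Sum>i\<in>I'. c i * u' i k) = 0" by (simp add: u'_def k)
    then have "- (c i1 + \<gamma>) * u i1 k = 0" using eq[of k] by simp
    then have "c i1 + \<gamma> = 0" using k by (metis mult_eq_0_iff neg_equal_0_iff_equal)
    then have rel': "\<forall>j. (\<Sum>i\<in>I'. c i * u' i j) = 0" using eq by simp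
    from less(1)[OF cI' fI' i0I' u'S rel' less(6)]
    obtain d' where d': "\<forall>i. d' i \<in> S" "\<forall>j. (\<Sum>i\<in>I'. d' i * u' i j) = 0" "d' i0 \<noteq> 0" by blast
    define \<delta> where "\<delta> = (\<Sum>i\<in>I'. d' i * (u i k / u i1 k))"
    define d where "d = d'(i1 := - \<delta>)"
    have dS: "\<forall>i. d i \<in> S"
    proof
      fix i
      have "\<delta> \<in> S" unfolding \<delta>_def using d'(1) less i1
        by (intro subfield_sum[OF S]) (auto simp: I'_def intro!: cS)
      then show "d i \<in> S" using d'(1) cS by (simp add: d_def)
    qed
    have "\<forall>j. (\<Sum>i\<in>I. d i * u i j) = 0"
    proof
      fix j
      have s1: "(\<Sum>i\<in>I'. d i * u i j) = (\<Sum>i\<in>I'. d' i * u i j)"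
        by (intro sum.cong) (auto simp: d_def I'_def)
      have "(\<Sum>i\<in>I'. d' i * u' i j) = (\<Sum>i\<in>I'. (d' i * u i j - (d' i * (u i k / u i1 k)) * u i1 j))"
        by (intro sum.cong) (auto simp: u'_def algebra_simps)
      also have "\<dots> = (\<Sum>i\<in>I'. d' i * u i j) - \<delta> * u i1 j"
        by (simp add: sum_subtractf \<delta>_def sum_distrib_right)
      finally have "(\<Sum>i\<in>I'. d' i * u' i j) = (\<Sum>i\<in>I'. d' i * u i j) - \<delta> * u i1 j" .
      then have "(\<Sum>i\<in>I'. d' i * u i j) = \<delta> * u i1 j" using d'(2) by simp
      then show "(\<Sum>i\<in>I. d i * u i j) = 0" using split[of "\<lambda>i. d i * u i j"] s1
        by (simp add: d_def)
    qed
    moreover have "d i0 \<noteq> 0" using d'(3) i1 by (simp add: d_def)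
    ultimately show ?thesis using dS by blast
  qed
qed

lemma steinitz:
  assumes "finite W"
  shows "finite I \<Longrightarrow> card W < card I \<Longrightarrow> \<forall>i\<in>I. u i \<in> vspan W \<Longrightarrow> \<not> lin_indep_fam u I"
  using assms
proof (induct W arbitrary: I u rule: finite_induct)
  case empty
  then obtain i0 where i0: "i0 \<in> I" by fastforce
  have u0: "u i0 j = 0" for j using empty i0 by (auto simp: vspan_empty)
  have "\<forall>j. (\<Sum>i\<in>I. (if i = i0 then 1 else 0) * u i j) = 0"
  proof
    fix j
    have "(\<Sum>i\<in>I. (if i = i0 then 1 else 0) * u i j) = (\<Sum>i\<in>I. if i = i0 then u i j else 0)"
      by (intro sum.cong) auto
    also have "\<dots> = 0" using empty i0 u0 by (simp add: sum.delta)
    finally show "(\<Sum>i\<in>I. (if i = i0 then 1 else 0) * u i j) = 0" .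
  qed
  then show ?case using i0 unfolding dep_iff
    by (intro impI exI[of _ "\<lambda>i. if i = i0 then 1 else 0"]) auto
next
  case (insert w W)
  have ex: "\<forall>i\<in>I. \<exists>a. (\<lambda>j. u i j - a * w j) \<in> vspan W"
    using insert vspan_insert[OF insert(1)] by blast
  define a where "a i = (SOME a. (\<lambda>j. u i j - a * w j) \<in> vspan W)" for i
  have a: "(\<lambda>j. u i j - a i * w j) \<in> vspan W" if "i \<in> I" for i
    unfolding a_def using someI_ex ex that by fast
  show ?case
  proof (cases "\<forall>i\<in>I. a i = 0")
    case True
    then have "\<forall>i\<in>I. u i \<in> vspan W" using a by fastforce
    moreover have "card W < card I" using insert by simp
    ultimately show ?thesis using insert by blast
  next
    case False
    then obtain i0 where i0: "i0 \<in> I" "a i0 \<noteq> 0" by blast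
    define I' where "I' = I - {i0}"
    define u' where "u' i j = u i j - (a i / a i0) * u i0 j" for i j
    have fI': "finite I'" using insert by (simp add: I'_def)
    have cI': "card W < card I'" using insert i0 by (simp add: I'_def)
    have u'W: "\<forall>i\<in>I'. u' i \<in> vspan W"
    proof
      fix i assume "i \<in> I'"
      then have iI: "i \<in> I" by (simp add: I'_def)
      have "(\<lambda>j. 1 * (u i j - a i * w j) + (- (a i / a i0)) * (u i0 j - a i0 * w j)) \<in> vspan W"
        using a[OF iI] a[OF i0(1)] by (rule vspan_lin)
      moreover have "(\<lambda>j. 1 * (u i j - a i * w j) + (- (a i / a i0)) * (u i0 j - a i0 * w j)) = u' i"
        using i0(2) by (auto simp: u'_def fun_eq_iff field_simps)
      ultimately show "u' i \<in> vspan W" by simp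
    qed
    have "\<not> lin_indep_fam u' I'" using insert(3)[OF fI' cI' u'W] .
    then obtain c i1 where c: "\<forall>j. (\<Sum>i\<in>I'. c i * u' i j) = 0" "i1 \<in> I'" "c i1 \<noteq> 0"
      using fI' unfolding dep_iff by blast
    define \<delta> where "\<delta> = (\<Sum>i\<in>I'. c i * (a i / a i0))"
    define d where "d = c(i0 := - \<delta>)"
    have split: "(\<Sum>i\<in>I. f i) = f i0 + (\<Sum>i\<in>I'. f i)" for f :: "_ \<Rightarrow> 'a"
      using insert i0 by (simp add: I'_def sum.remove)
    have "\<forall>j. (\<Sum>i\<in>I. d i * u i j) = 0"
    proof
      fix j
      have s1: "(\<Sum>i\<in>I'. d i * u i j) = (\<Sum>i\<in>I'. c i * u i j)"
        by (intro sum.cong) (auto simp: d_def I'_def)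
      have "(\<Sum>i\<in>I'. c i * u' i j) = (\<Sum>i\<in>I'. (c i * u i j - (c i * (a i / a i0)) * u i0 j))"
        by (intro sum.cong) (auto simp: u'_def algebra_simps)
      also have "\<dots> = (\<Sum>i\<in>I'. c i * u i j) - \<delta> * u i0 j"
        by (simp add: sum_subtractf \<delta>_def sum_distrib_right)
      finally have "(\<Sum>i\<in>I'. c i * u' i j) = (\<Sum>i\<in>I'. c i * u i j) - \<delta> * u i0 j" .
      then have "(\<Sum>i\<in>I'. c i * u i j) = \<delta> * u i0 j" using c(1) by simp
      then show "(\<Sum>i\<in>I. d i * u i j) = 0" using split[of "\<lambda>i. d i * u i j"] s1
        by (simp add: d_def)
    qed
    moreover have "i1 \<in> I" "d i1 \<noteq> 0" using c(2,3) by (auto simp: d_def I'_def)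
    ultimately show ?thesis unfolding dep_iff by blast
  qed
qed


definition fiso :: "'a::field set \<Rightarrow> 'b::field set \<Rightarrow> ('a \<Rightarrow> 'b) \<Rightarrow> bool" where
  "fiso S T \<sigma> \<longleftrightarrow> bij_betw \<sigma> S T \<and> \<sigma> 1 = 1 \<and>
     (\<forall>x\<in>S. \<forall>y\<in>S. \<sigma> (x + y) = \<sigma> x + \<sigma> y \<and> \<sigma> (x * y) = \<sigma> x * \<sigma> y)"

context
  fixes S :: "'a::field set" and T :: "'b::field set" and \<sigma> :: "'a \<Rightarrow> 'b"
  assumes S: "subfield S" and T: "subfield T" and iso: "fiso S T \<sigma>"
begin

lemma fiso_add: "x \<in> S \<Longrightarrow> y \<in> S \<Longrightarrow> \<sigma> (x + y) = \<sigma> x + \<sigma> y"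
  using iso by (simp add: fiso_def)
lemma fiso_mult: "x \<in> S \<Longrightarrow> y \<in> S \<Longrightarrow> \<sigma> (x * y) = \<sigma> x * \<sigma> y"
  using iso by (simp add: fiso_def)
lemma fiso_1: "\<sigma> 1 = 1"
  using iso by (simp add: fiso_def)
lemma fiso_in: "x \<in> S \<Longrightarrow> \<sigma> x \<in> T"
  using iso by (auto simp: fiso_def bij_betw_def)
lemma fiso_inj: "x \<in> S \<Longrightarrow> y \<in> S \<Longrightarrow> \<sigma> x = \<sigma> y \<longleftrightarrow> x = y"
  using iso by (auto simp: fiso_def bij_betw_def inj_on_def)
lemma fiso_0: "\<sigma> 0 = 0"
proof -
  have "0 \<in> S" using subfield_closed(1)[OF S] .
  then have "\<sigma> (0 + 0) = \<sigma> 0 + \<sigma> 0" using fiso_add by blast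
  then show ?thesis by (metis add.right_neutral add_left_cancel)
qed
lemma fiso_eq0: "x \<in> S \<Longrightarrow> \<sigma> x = 0 \<longleftrightarrow> x = 0"
proof -
  assume x: "x \<in> S"
  have "0 \<in> S" using subfield_closed(1)[OF S] .
  then show ?thesis using fiso_inj[OF x] fiso_0 by metis
qed
lemma fiso_neg: "x \<in> S \<Longrightarrow> \<sigma> (- x) = - \<sigma> x"
proof -
  assume x: "x \<in> S"
  then have "\<sigma> (x + - x) = \<sigma> x + \<sigma> (- x)" using subfield_closed[OF S] by (intro fiso_add) auto
  then have "\<sigma> x + \<sigma> (- x) = 0" using fiso_0 by simp
  then show ?thesis by (simp add: add_eq_0_iff)
qed
lemma fiso_diff: "x \<in> S \<Longrightarrow> y \<in> S \<Longrightarrow> \<sigma> (x - y) = \<sigma> x - \<sigma> y"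
  using fiso_add[of x "- y"] fiso_neg[of y] subfield_closed[OF S] by simp
lemma fiso_inverse: "x \<in> S \<Longrightarrow> \<sigma> (inverse x) = inverse (\<sigma> x)"
proof (cases "x = 0")
  case True then show ?thesis using fiso_0 by simp
next
  case False
  assume x: "x \<in> S"
  then have "\<sigma> (x * inverse x) = \<sigma> x * \<sigma> (inverse x)"
    using subfield_closed[OF S] by (intro fiso_mult) auto
  then have "\<sigma> x * \<sigma> (inverse x) = 1" using False fiso_1 by simp
  then show ?thesis by (rule inverse_unique[symmetric])
qed
lemma fiso_divide: "x \<in> S \<Longrightarrow> y \<in> S \<Longrightarrow> \<sigma> (x / y) = \<sigma> x / \<sigma> y"
  using fiso_mult[of x "inverse y"] fiso_inverse[of y] subfield_closed[OF S]
  by (simp add: divide_inverse)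
lemma fiso_sum: "(\<And>i. i \<in> I \<Longrightarrow> f i \<in> S) \<Longrightarrow> \<sigma> (sum f I) = (\<Sum>i\<in>I. \<sigma> (f i))"
proof (induct I rule: infinite_finite_induct)
  case (infinite A) then show ?case using fiso_0 by simp
next
  case empty then show ?case using fiso_0 by simp
next
  case (insert i I)
  then have "\<sigma> (f i + sum f I) = \<sigma> (f i) + \<sigma> (sum f I)"
    by (intro fiso_add) (auto intro: subfield_sum[OF S])
  then show ?case using insert by simp
qed

lemma fiso_inv: "fiso T S (inv_into S \<sigma>)"
proof -
  have bij: "bij_betw \<sigma> S T" using iso by (simp add: fiso_def)
  let ?i = "inv_into S \<sigma>"
  have iT: "y \<in> T \<Longrightarrow> ?i y \<in> S" for y using bij by (metis bij_betw_imp_surj_on inv_into_into)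
  have fi: "y \<in> T \<Longrightarrow> \<sigma> (?i y) = y" for y using bij by (meson bij_betw_inv_into_right)
  have ifx: "x \<in> S \<Longrightarrow> ?i (\<sigma> x) = x" for x using bij by (meson bij_betw_inv_into_left)
  note cS = subfield_closed[OF S]
  have "?i 1 = 1" using ifx[of 1] fiso_1 cS by simp
  moreover have "?i (a + b) = ?i a + ?i b \<and> ?i (a * b) = ?i a * ?i b" if "a \<in> T" "b \<in> T" for a b
  proof -
    have "?i (\<sigma> (?i a + ?i b)) = ?i a + ?i b" using iT that cS by (intro ifx) auto
    moreover have "?i (\<sigma> (?i a * ?i b)) = ?i a * ?i b" using iT that cS by (intro ifx) auto
    ultimately show ?thesis using fiso_add fiso_mult iT fi that by metis
  qed
  ultimately show ?thesis using bij_betw_inv_into[OF bij] by (simp add: fiso_def)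
qed

lemma fiso_dep:
  fixes u :: "'i \<Rightarrow> nat \<Rightarrow> 'a"
  assumes I: "finite I" and uS: "\<forall>i\<in>I. \<forall>j. u i j \<in> S" and dep: "\<not> lin_indep_fam u I"
  shows "\<not> lin_indep_fam (\<lambda>i j. \<sigma> (u i j)) I"
proof -
  obtain c i0 where c: "\<forall>j. (\<Sum>i\<in>I. c i * u i j) = 0" "i0 \<in> I" "c i0 \<noteq> 0"
    using dep I unfolding dep_iff by blast
  obtain d where d: "\<forall>i. d i \<in> S" "\<forall>j. (\<Sum>i\<in>I. d i * u i j) = 0" "d i0 \<noteq> 0"
    using rational_dep[OF S I c(2) uS c(1) c(3)] by blast
  have "\<forall>j. (\<Sum>i\<in>I. \<sigma> (d i) * \<sigma> (u i j)) = 0"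
  proof
    fix j
    have "\<sigma> (\<Sum>i\<in>I. d i * u i j) = (\<Sum>i\<in>I. \<sigma> (d i * u i j))"
      using d(1) uS subfield_closed[OF S] by (intro fiso_sum) auto
    also have "\<dots> = (\<Sum>i\<in>I. \<sigma> (d i) * \<sigma> (u i j))"
      using d(1) uS by (intro sum.cong fiso_mult) auto
    finally show "(\<Sum>i\<in>I. \<sigma> (d i) * \<sigma> (u i j)) = 0" using d(2) fiso_0 by simp
  qed
  moreover have "\<sigma> (d i0) \<noteq> 0" using fiso_eq0 d by auto
  ultimately show ?thesis using c(2) unfolding dep_iff
    by (intro impI exI[of _ "\<lambda>i. \<sigma> (d i)"] conjI) auto
qed

lemma fiso_comb:
  fixes u :: "'i \<Rightarrow> nat \<Rightarrow> 'a" and x :: "nat \<Rightarrow> 'a"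
  assumes I: "finite I" and uS: "\<forall>i\<in>I. \<forall>j. u i j \<in> S" and xS: "\<forall>j. x j \<in> S"
    and comb: "\<forall>j. x j = (\<Sum>i\<in>I. c i * u i j)"
  shows "\<exists>d. \<forall>j. \<sigma> (x j) = (\<Sum>i\<in>I. d i * \<sigma> (u i j))"
proof -
  define U where "U k = (case k of None \<Rightarrow> x | Some i \<Rightarrow> u i)" for k
  define J where "J = insert None (Some ` I)"
  have sJ: "(\<Sum>k\<in>J. f k) = f None + (\<Sum>i\<in>I. f (Some i))" for f :: "_ \<Rightarrow> 'a"
    using I by (simp add: J_def sum.reindex)
  have sJb: "(\<Sum>k\<in>J. f k) = f None + (\<Sum>i\<in>I. f (Some i))" for f :: "_ \<Rightarrow> 'b"
    using I by (simp add: J_def sum.reindex)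
  define C where "C k = (case k of None \<Rightarrow> 1 | Some i \<Rightarrow> - c i)" for k
  have rel: "\<forall>j. (\<Sum>k\<in>J. C k * U k j) = 0"
    using comb by (simp add: sJ C_def U_def sum_negf)
  have UJ: "\<forall>k\<in>J. \<forall>j. U k j \<in> S" using uS xS by (auto simp: J_def U_def)
  obtain D where D: "\<forall>k. D k \<in> S" "\<forall>j. (\<Sum>k\<in>J. D k * U k j) = 0" "D None \<noteq> 0"
  proof -
    have fJ: "finite J" "None \<in> J" "C None \<noteq> 0" using I by (auto simp: J_def C_def)
    note rd = rational_dep[of S J None U C]
    show ?thesis using rd S fJ UJ rel that by blast
  qed
  have sDN: "\<sigma> (D None) \<noteq> 0" using fiso_eq0 D by auto
  show ?thesis
  proof (intro exI allI)
    fix j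
    have "\<sigma> (\<Sum>k\<in>J. D k * U k j) = (\<Sum>k\<in>J. \<sigma> (D k) * \<sigma> (U k j))"
    proof -
      have "\<sigma> (\<Sum>k\<in>J. D k * U k j) = (\<Sum>k\<in>J. \<sigma> (D k * U k j))"
        using D(1) UJ subfield_closed[OF S] by (intro fiso_sum) auto
      also have "\<dots> = (\<Sum>k\<in>J. \<sigma> (D k) * \<sigma> (U k j))"
        using D(1) UJ by (intro sum.cong fiso_mult) auto
      finally show ?thesis .
    qed
    then have "\<sigma> (D None) * \<sigma> (x j) + (\<Sum>i\<in>I. \<sigma> (D (Some i)) * \<sigma> (u i j)) = 0"
      using D(2) fiso_0 by (simp add: sJb U_def)
    then have "\<sigma> (x j) = - (\<Sum>i\<in>I. \<sigma> (D (Some i)) * \<sigma> (u i j)) / \<sigma> (D None)"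
      using sDN by (simp add: field_simps eq_neg_iff_add_eq_0)
    also have "\<dots> = (\<Sum>i\<in>I. (- \<sigma> (D (Some i)) / \<sigma> (D None)) * \<sigma> (u i j))"
      by (simp add: sum_divide_distrib sum_negf[symmetric])
    finally show "\<sigma> (x j) = (\<Sum>i\<in>I. (- \<sigma> (D (Some i)) / \<sigma> (D None)) * \<sigma> (u i j))" .
  qed
qed

lemma fiso_span:
  fixes A :: "'e \<Rightarrow> nat \<Rightarrow> 'a"
  assumes Y: "finite Y" "inj_on A Y" "inj_on (\<lambda>e j. \<sigma> (A e j)) Y"
    and AS: "\<forall>y\<in>Y. \<forall>j. A y j \<in> S" "\<forall>j. A e j \<in> S"
    and sp: "A e \<in> vspan (A ` Y)"
  shows "(\<lambda>j. \<sigma> (A e j)) \<in> vspan ((\<lambda>e j. \<sigma> (A e j)) ` Y)"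
proof -
  obtain c where "\<forall>j. A e j = (\<Sum>y\<in>Y. c y * A y j)" using sp vspan_image[OF Y(2)] by blast
  from fiso_comb[OF Y(1) AS(1) AS(2) this]
  obtain d where "\<forall>j. \<sigma> (A e j) = (\<Sum>y\<in>Y. d y * \<sigma> (A y j))" by blast
  then show ?thesis using vspan_image[OF Y(3)] by blast
qed

end


lemma rat_comb:
  fixes u :: "'i \<Rightarrow> nat \<Rightarrow> 'a::field" and x :: "nat \<Rightarrow> 'a"
  assumes S: "subfield S" and I: "finite I" and uS: "\<forall>i\<in>I. \<forall>j. u i j \<in> S" and xS: "\<forall>j. x j \<in> S"
    and comb: "\<forall>j. x j = (\<Sum>i\<in>I. c i * u i j)"
  shows "\<exists>d. (\<forall>i. d i \<in> S) \<and> (\<forall>j. x j = (\<Sum>i\<in>I. d i * u i j))"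
proof -
  define U where "U k = (case k of None \<Rightarrow> x | Some i \<Rightarrow> u i)" for k
  define J where "J = insert None (Some ` I)"
  have sJ: "(\<Sum>k\<in>J. f k) = f None + (\<Sum>i\<in>I. f (Some i))" for f :: "_ \<Rightarrow> 'a"
    using I by (simp add: J_def sum.reindex)
  define C where "C k = (case k of None \<Rightarrow> 1 | Some i \<Rightarrow> - c i)" for k
  have rel: "\<forall>j. (\<Sum>k\<in>J. C k * U k j) = 0"
    using comb by (simp add: sJ C_def U_def sum_negf)
  have UJ: "\<forall>k\<in>J. \<forall>j. U k j \<in> S" using uS xS by (auto simp: J_def U_def)
  have fJ: "finite J" "None \<in> J" "C None \<noteq> 0" using I by (auto simp: J_def C_def)
  obtain D where D: "\<forall>k. D k \<in> S" "\<forall>j. (\<Sum>k\<in>J. D k * U k j) = 0" "D None \<noteq> 0"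
    using rational_dep[OF S fJ(1,2) UJ rel fJ(3)] by blast
  note cS = subfield_closed[OF S]
  show ?thesis
  proof (intro exI conjI allI)
    fix i show "- D (Some i) / D None \<in> S" using D(1) cS by auto
  next
    fix j
    have "D None * x j + (\<Sum>i\<in>I. D (Some i) * u i j) = 0"
      using D(2) by (simp add: sJ U_def)
    then have "x j = - (\<Sum>i\<in>I. D (Some i) * u i j) / D None"
      using D(3) by (simp add: field_simps eq_neg_iff_add_eq_0)
    also have "\<dots> = (\<Sum>i\<in>I. (- D (Some i) / D None) * u i j)"
      by (simp add: sum_divide_distrib sum_negf[symmetric])
    finally show "x j = (\<Sum>i\<in>I. (- D (Some i) / D None) * u i j)" .
  qed
qed

locale pgrep =
  fixes S :: "'a::field set" and n :: nat and A :: "'e \<Rightarrow> nat \<Rightarrow> 'a" and E :: "'e set"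
  assumes S: "subfield S" and finE: "finite E" and PG: "is_PG_rep S n A E"
begin

lemma AS: "e \<in> E \<Longrightarrow> A e j \<in> S"
  using PG by (simp add: is_PG_rep_def)
lemma An: "e \<in> E \<Longrightarrow> n \<le> j \<Longrightarrow> A e j = 0"
  using PG by (simp add: is_PG_rep_def)
lemma Anz: "e \<in> E \<Longrightarrow> A e \<noteq> (\<lambda>j. 0)"
  using PG by (simp add: is_PG_rep_def)
lemma Anp: "e \<in> E \<Longrightarrow> e' \<in> E \<Longrightarrow> e \<noteq> e' \<Longrightarrow> \<not> parallel (A e) (A e')"
  using PG by (simp add: is_PG_rep_def)
lemma Apt: "(\<forall>j. w j \<in> S) \<Longrightarrow> (\<forall>j. n \<le> j \<longrightarrow> w j = 0) \<Longrightarrow> w \<noteq> (\<lambda>j. 0) \<Longrightarrow> \<exists>e\<in>E. parallel w (A e)"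
  using PG by (simp add: is_PG_rep_def)

lemma Apt':
  assumes "\<forall>j. w j \<in> S" "\<forall>j. n \<le> j \<longrightarrow> w j = 0" "w \<noteq> (\<lambda>j. 0)"
  obtains e \<kappa> where "e \<in> E" "\<kappa> \<noteq> 0" "\<forall>j. w j = \<kappa> * A e j"
proof -
  obtain e c where e: "e \<in> E" "w = (\<lambda>j. c * A e j)" using Apt[OF assms] unfolding parallel_def by blast
  then have "c \<noteq> 0" using assms(3) by auto
  then show ?thesis using that e by auto
qed

lemma inj_A: "inj_on A E"
proof (rule inj_onI)
  fix e e' assume "e \<in> E" "e' \<in> E" "A e = A e'"
  then show "e = e'" using Anp[of e e'] unfolding parallel_def by (metis (no_types) mult_1 )
qed

lemma indep2:
  assumes "c \<in> E" "d \<in> E" "c \<noteq> d" "\<forall>j. x * A c j + y * A d j = 0"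
  shows "x = 0 \<and> y = 0"
proof (cases "x = 0")
  case True
  then have "\<forall>j. y * A d j = 0" using assms by simp
  then show ?thesis using True Anz[OF assms(2)] by (auto simp: fun_eq_iff)
next
  case False
  then have "A c = (\<lambda>j. (- y / x) * A d j)" using assms(4)
    by (auto simp: fun_eq_iff field_simps eq_neg_iff_add_eq_0)
  then show ?thesis using Anp[OF assms(1-3)] unfolding parallel_def by blast
qed

lemma mcl_two: "mcl A E {c, d} = {e\<in>E. \<exists>x y. \<forall>j. A e j = x * A c j + y * A d j}"
  by (simp add: mcl_def vspan_two)

lemma mcl_sub: "mcl A E X \<subseteq> E" by (auto simp: mcl_def)

lemma line_span:
  assumes "c \<in> E" "d \<in> E"
  shows "vspan (A ` mcl A E {c, d}) = vspan {A c, A d}"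
proof
  have fin: "finite (A ` mcl A E {c, d})" using finE mcl_sub finite_subset by blast
  show "vspan (A ` mcl A E {c, d}) \<subseteq> vspan {A c, A d}"
    by (rule vspan_trans[OF fin]) (auto simp: mcl_def)
  have "c \<in> mcl A E {c, d}" "d \<in> mcl A E {c, d}"
    using assms by (auto simp: mcl_def intro: vspan_mem)
  then show "vspan {A c, A d} \<subseteq> vspan (A ` mcl A E {c, d})"
    by (intro vspan_trans) (auto intro: vspan_mem fin)
qed

lemma line_mem:
  assumes "c \<in> E" "d \<in> E"
  shows "c \<in> mcl A E {c, d}" "d \<in> mcl A E {c, d}"
  using assms by (auto simp: mcl_def intro: vspan_mem)

lemma span_zero_n:
  assumes "finite W" "\<forall>w\<in>W. \<forall>j. n \<le> j \<longrightarrow> w j = 0" "x \<in> vspan W" "n \<le> j"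
  shows "x j = 0"
  using assms unfolding vspan_iff by (auto intro!: sum.neutral)

end


locale pgsetup = pgrep +
  fixes L0 :: "'e set" and a b f :: 'e and v :: "nat \<Rightarrow> 'a::field"
  assumes ab: "a \<in> E" "b \<in> E" "a \<noteq> b" and L0: "L0 = mcl A E {a, b}"
    and fE: "f \<in> E" and fL0: "f \<notin> L0"
    and vsp: "v \<in> vspan (A ` L0)" and vnp: "\<forall>e\<in>L0. \<not> parallel v (A e)"
begin

lemma aL0: "a \<in> L0" "b \<in> L0" using line_mem[OF ab(1,2)] L0 by auto

lemma v_coords: "\<exists>\<gamma> \<delta>. \<forall>j. v j = \<gamma> * A a j + \<delta> * A b j"
proof -
  have "v \<in> vspan {A a, A b}" using vsp line_span[OF ab(1,2)] L0 by simp
  then show ?thesis by (simp add: vspan_two)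
qed

lemma v_nz: "v \<noteq> (\<lambda>j. 0)"
proof
  assume "v = (\<lambda>j. 0)"
  then have "parallel v (A a)" unfolding parallel_def by (intro exI[of _ 0]) simp
  then show False using vnp aL0 by auto
qed

lemma indep3:
  assumes "\<forall>j. x * A a j + y * A b j + z * A f j = 0"
  shows "x = 0 \<and> y = 0 \<and> z = 0"
proof (cases "z = 0")
  case True
  then show ?thesis using indep2[OF ab, of x y] assms by simp
next
  case False
  have "\<forall>j. A f j = (- x / z) * A a j + (- y / z) * A b j"
  proof
    fix j
    have "z * A f j = - x * A a j - y * A b j" using assms[rule_format, of j]
      by (simp add: algebra_simps eq_neg_iff_add_eq_0)
    then show "A f j = (- x / z) * A a j + (- y / z) * A b j" using False
      by (simp add: field_simps)
  qed
  then have "f \<in> L0" unfolding L0 mcl_two using fE by blast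
  then show ?thesis using fL0 by simp
qed

lemma coords_unique:
  assumes "\<forall>j. x1 * A a j + x2 * A b j + x3 * A f j = y1 * A a j + y2 * A b j + y3 * A f j"
  shows "x1 = y1 \<and> x2 = y2 \<and> x3 = y3"
proof -
  have "\<forall>j. (x1 - y1) * A a j + (x2 - y2) * A b j + (x3 - y3) * A f j = 0"
    using assms by (simp add: algebra_simps)
  from indep3[OF this] show ?thesis by simp
qed

lemma S_coords:
  assumes "\<forall>j. w j \<in> S" "\<forall>j. w j = x1 * A a j + x2 * A b j + x3 * A f j"
  shows "x1 \<in> S \<and> x2 \<in> S \<and> x3 \<in> S"
proof -
  define u where "u i = (if i = (0::nat) then A a else if i = 1 then A b else A f)" for i
  have uS: "\<forall>i\<in>{0,1,2}. \<forall>j. u i j \<in> S" using AS ab fE by (auto simp: u_def)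
  define c where "c i = (if i = (0::nat) then x1 else if i = 1 then x2 else x3)" for i
  have wc: "\<forall>j. w j = (\<Sum>i\<in>{0,1,2}. c i * u i j)" using assms(2) by (simp add: c_def u_def)
  have fin: "finite {0,1,2::nat}" by simp
  from rat_comb[OF S fin uS assms(1) wc]
  obtain d where d: "\<forall>i. d i \<in> S" "\<forall>j. w j = (\<Sum>i\<in>{0,1,2}. d i * u i j)" by blast
  have ex: "(\<Sum>i\<in>{0,1,2::nat}. d i * u i j) = d 0 * A a j + d 1 * A b j + d 2 * A f j" for j
    by (simp add: u_def)
  have "\<forall>j. x1 * A a j + x2 * A b j + x3 * A f j = d 0 * A a j + d 1 * A b j + d 2 * A f j"
    using d(2) assms(2) ex by metis
  then have "x1 = d 0 \<and> x2 = d 1 \<and> x3 = d 2" by (rule coords_unique)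
  then show ?thesis using d(1) by simp
qed

lemma S_vec_n:
  assumes "s1 \<in> S" "s2 \<in> S" "s3 \<in> S"
  shows "\<forall>j. s1 * A a j + s2 * A b j + s3 * A f j \<in> S"
    "\<forall>j. n \<le> j \<longrightarrow> s1 * A a j + s2 * A b j + s3 * A f j = 0"
  using assms AS ab fE An subfield_closed[OF S] by auto

lemma pt_on_l:
  assumes g: "g \<in> E" and gl: "A g \<in> vspan {v, A f}"
  shows "g = f"
proof -
  obtain \<alpha> \<beta> where ab': "\<forall>j. A g j = \<alpha> * v j + \<beta> * A f j" using gl vspan_two by blast
  obtain \<gamma> \<delta> where gd: "\<forall>j. v j = \<gamma> * A a j + \<delta> * A b j" using v_coords by blast
  have co: "\<forall>j. A g j = (\<alpha> * \<gamma>) * A a j + (\<alpha> * \<delta>) * A b j + \<beta> * A f j"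
    using ab' gd by (simp add: algebra_simps)
  have inS: "\<alpha> * \<gamma> \<in> S" "\<alpha> * \<delta> \<in> S" "\<beta> \<in> S" using S_coords[OF _ co] AS[OF g] by auto
  show ?thesis
  proof (cases "\<alpha> = 0")
    case True
    then have "parallel (A g) (A f)" using ab' unfolding parallel_def by auto
    then show ?thesis using Anp[OF g fE] by auto
  next
    case False
    define w where "w j = (\<alpha> * \<gamma>) * A a j + (\<alpha> * \<delta>) * A b j + 0 * A f j" for j
    have wv: "w = (\<lambda>j. \<alpha> * v j)" using gd by (auto simp: w_def fun_eq_iff algebra_simps)
    have "w \<noteq> (\<lambda>j. 0)" using wv False v_nz by (auto simp: fun_eq_iff)
    moreover have "\<forall>j. w j \<in> S" "\<forall>j. n \<le> j \<longrightarrow> w j = 0"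
      unfolding w_def using S_vec_n[OF inS(1,2)] subfield_closed(1)[OF S] by blast+
    ultimately obtain e \<kappa> where e: "e \<in> E" "\<kappa> \<noteq> 0" "\<forall>j. w j = \<kappa> * A e j" using Apt' by blast
    have Ae: "\<forall>j. A e j = (\<alpha> * \<gamma> / \<kappa>) * A a j + (\<alpha> * \<delta> / \<kappa>) * A b j"
      using e wv unfolding w_def by (auto simp: field_simps)
    then have "e \<in> L0" unfolding L0 mcl_two using e(1) by blast
    moreover have "parallel v (A e)" unfolding parallel_def
      using e(2,3) wv False by (intro exI[of _ "\<kappa> / \<alpha>"]) (auto simp: fun_eq_iff field_simps)
    ultimately show ?thesis using vnp by blast
  qed
qed

end


lemma sum_plus:
  assumes "finite Y" "finite Z"
  shows "(\<Sum>i\<in>Inl ` Y \<union> Inr ` Z. g i) = (\<Sum>y\<in>Y. g (Inl y)) + (\<Sum>z\<in>Z. g (Inr z))"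
proof -
  have "(\<Sum>i\<in>Inl ` Y \<union> Inr ` Z. g i) = (\<Sum>i\<in>Inl ` Y. g i) + (\<Sum>i\<in>Inr ` Z. g i)"
    using assms by (intro sum.union_disjoint) auto
  also have "\<dots> = (\<Sum>y\<in>Y. g (Inl y)) + (\<Sum>z\<in>Z. g (Inr z))"
    by (simp add: sum.reindex)
  finally show ?thesis .
qed

context pgrep
begin

lemma inj_Y: "Y \<subseteq> E \<Longrightarrow> inj_on A Y"
  using inj_A inj_on_subset by blast

lemma finY: "Y \<subseteq> E \<Longrightarrow> finite Y"
  using finE finite_subset by blast

lemma span_Y: "Y \<subseteq> E \<Longrightarrow> x \<in> vspan (A ` Y) \<longleftrightarrow> (\<exists>c. \<forall>j. x j = (\<Sum>y\<in>Y. c y * A y j))"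
  using vspan_image[OF inj_Y] by blast

end

context pgsetup
begin

lemma line_core:
  assumes c: "c \<in> E" "d \<in> E" "c \<noteq> d" and fcd: "f \<notin> mcl A E {c, d}"
    and Y: "Y \<subseteq> E"
    and x: "x \<in> vspan {v, A f}" "\<forall>j. x j = lam * A c j + mu * A d j" "lam \<noteq> 0"
    and xY: "x \<in> vspan (A ` Y)"
  shows "A c \<in> vspan (A ` Y) \<and> A d \<in> vspan (A ` Y)"
proof -
  have fY: "finite Y" using finY[OF Y] .
  obtain k where k: "\<forall>j. x j = (\<Sum>y\<in>Y. k y * A y j)" using xY span_Y[OF Y] by blast
  define I where "I = Inl ` Y \<union> Inr ` {True, False}"
  define U where "U = case_sum A (\<lambda>t. if t then A c else A d)"
  define C where "C = case_sum k (\<lambda>t. if t then - lam else - mu)"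
  have sI: "(\<Sum>i\<in>I. g i) = (\<Sum>y\<in>Y. g (Inl y)) + g (Inr True) + g (Inr False)" for g :: "_ \<Rightarrow> 'a"
    unfolding I_def using sum_plus[OF fY, of "{True, False}" g] by simp
  have rel: "\<forall>j. (\<Sum>i\<in>I. C i * U i j) = 0"
  proof
    fix j
    have "(\<Sum>i\<in>I. C i * U i j) = (\<Sum>y\<in>Y. k y * A y j) - lam * A c j - mu * A d j"
      by (simp add: sI C_def U_def)
    also have "(\<Sum>y\<in>Y. k y * A y j) = lam * A c j + mu * A d j"
      using k[rule_format, of j] x(2)[rule_format, of j] by simp
    finally show "(\<Sum>i\<in>I. C i * U i j) = 0" by simp
  qed
  have UI: "\<forall>i\<in>I. \<forall>j. U i j \<in> S" using AS Y c by (auto simp: I_def U_def)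
  have fI: "finite I" "Inr True \<in> I" "C (Inr True) \<noteq> 0" using fY x(3) by (auto simp: I_def C_def)
  obtain D where D: "\<forall>i. D i \<in> S" "\<forall>j. (\<Sum>i\<in>I. D i * U i j) = 0" "D (Inr True) \<noteq> 0"
    using rational_dep[OF S fI(1,2) UI rel fI(3)] by blast
  define dT where "dT = D (Inr True)"
  define dF where "dF = D (Inr False)"
  define p where "p j = dT * A c j + dF * A d j" for j
  have pY: "p \<in> vspan (A ` Y)"
  proof -
    have "\<forall>j. p j = (\<Sum>y\<in>Y. (- D (Inl y)) * A y j)"
    proof
      fix j
      have "(\<Sum>y\<in>Y. D (Inl y) * A y j) + p j = 0"
        using D(2) by (simp add: sI U_def p_def dT_def dF_def add.assoc)
      then show "p j = (\<Sum>y\<in>Y. (- D (Inl y)) * A y j)"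
        by (simp add: sum_negf eq_neg_iff_add_eq_0 add.commute)
    qed
    then show ?thesis unfolding span_Y[OF Y] by (rule exI[of _ "\<lambda>y. - D (Inl y)"])
  qed
  show ?thesis
  proof (cases "lam * dF - mu * dT = 0")
    case False
    define \<Delta> where "\<Delta> = lam * dF - mu * dT"
    have D0: "\<Delta> \<noteq> 0" using False by (simp add: \<Delta>_def)
    have Ac: "A c = (\<lambda>j. (dF / \<Delta>) * x j + (- mu / \<Delta>) * p j)"
    proof
      fix j
      have "dF * x j - mu * p j = \<Delta> * A c j"
        using x(2) by (simp add: p_def \<Delta>_def algebra_simps)
      then show "A c j = (dF / \<Delta>) * x j + (- mu / \<Delta>) * p j"
        using D0 by (simp add: field_simps)
    qed
    have Ad: "A d = (\<lambda>j. (- dT / \<Delta>) * x j + (lam / \<Delta>) * p j)"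
    proof
      fix j
      have "lam * p j - dT * x j = \<Delta> * A d j"
        using x(2) by (simp add: p_def \<Delta>_def algebra_simps)
      then show "A d j = (- dT / \<Delta>) * x j + (lam / \<Delta>) * p j"
        using D0 by (simp add: field_simps)
    qed
    have "A c \<in> vspan (A ` Y)" unfolding Ac by (rule vspan_lin[OF xY pY])
    moreover have "A d \<in> vspan (A ` Y)"
    proof -
      have "(\<lambda>j. (- dT / \<Delta>) * x j + (lam / \<Delta>) * p j) \<in> vspan (A ` Y)" by (rule vspan_lin[OF xY pY])
      then show ?thesis using Ad by simp
    qed
    ultimately show ?thesis by simp
  next
    case True
    have dT0: "dT \<noteq> 0" using D(3) by (simp add: dT_def)
    have xp: "\<forall>j. x j = (lam / dT) * p j"
    proof
      fix j
      have "lam * dF = mu * dT" using True by simp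
      then have "dT * x j = lam * p j" using x(2)
        by (simp add: p_def algebra_simps)
      then show "x j = (lam / dT) * p j" using dT0 by (simp add: field_simps)
    qed
    have pS: "\<forall>j. p j \<in> S" using D(1) AS c subfield_closed[OF S] by (auto simp: p_def dT_def dF_def)
    have pn: "\<forall>j. n \<le> j \<longrightarrow> p j = 0" using An c by (simp add: p_def)
    have pnz: "p \<noteq> (\<lambda>j. 0)"
    proof
      assume "p = (\<lambda>j. 0)"
      then have "\<forall>j. dT * A c j + dF * A d j = 0" by (auto simp: p_def fun_eq_iff dest: fun_cong)
      then show False using indep2[OF c] dT0 by blast
    qed
    obtain g \<kappa> where g: "g \<in> E" "\<kappa> \<noteq> 0" "\<forall>j. p j = \<kappa> * A g j" using Apt'[OF pS pn pnz] by blast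
    have "A g = (\<lambda>j. (dT / (lam * \<kappa>)) * x j)"
      using xp g(2,3) x(3) dT0 by (auto simp: fun_eq_iff field_simps)
    then have "A g \<in> vspan {v, A f}" using vspan_smult[OF x(1), of "dT / (lam * \<kappa>)"] by simp
    then have "g = f" using pt_on_l g(1) by blast
    then have "\<forall>j. A f j = (dT / \<kappa>) * A c j + (dF / \<kappa>) * A d j"
      using g(2,3) by (auto simp: p_def field_simps)
    then have "f \<in> mcl A E {c, d}" unfolding mcl_two using fE by blast
    then show ?thesis using fcd by simp
  qed
qed

end


context pgsetup
begin

lemma line_cd:
  assumes "L \<in> lines_off A E L0 f"
  obtains c d where "c \<in> E" "d \<in> E" "c \<noteq> d" "L = mcl A E {c, d}" "f \<notin> L" "L \<subseteq> E"
  using assms mcl_sub unfolding lines_off_def is_line_def by blast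

lemma line_closed:
  assumes "c \<in> E" "d \<in> E" "e \<in> E" "A e \<in> vspan (A ` mcl A E {c, d})"
  shows "e \<in> mcl A E {c, d}"
  using assms line_span[OF assms(1,2)] by (simp add: mcl_def)

lemma line_lemma:
  assumes L: "L \<in> lines_off A E L0 f" and x: "x \<noteq> (\<lambda>j. 0)" "x \<in> vspan (A ` L)" "x \<in> vspan {v, A f}"
    and Y: "Y \<subseteq> E" and xY: "x \<in> vspan (A ` Y)"
  shows "A ` L \<subseteq> vspan (A ` Y)"
proof -
  obtain c d where cd: "c \<in> E" "d \<in> E" "c \<noteq> d" "L = mcl A E {c, d}" "f \<notin> L" "L \<subseteq> E"
    using line_cd[OF L] by blast
  have fL: "f \<notin> mcl A E {c, d}" using cd by simp
  have "x \<in> vspan {A c, A d}" using x(2) line_span[OF cd(1,2)] cd(4) by simp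
  then obtain lam mu where lm: "\<forall>j. x j = lam * A c j + mu * A d j" by (auto simp: vspan_two)
  have both: "A c \<in> vspan (A ` Y) \<and> A d \<in> vspan (A ` Y)"
  proof (cases "lam = 0")
    case False
    show ?thesis by (rule line_core[OF cd(1-3) fL Y x(3) lm False xY])
  next
    case True
    have mu: "mu \<noteq> 0"
    proof
      assume "mu = 0"
      then have "x = (\<lambda>j. 0)" using lm True by auto
      then show False using x(1) by simp
    qed
    have fL': "f \<notin> mcl A E {d, c}" using fL by (simp add: insert_commute)
    have lm': "\<forall>j. x j = mu * A d j + lam * A c j" using lm by (simp add: add.commute)
    from line_core[OF cd(2) cd(1) cd(3)[symmetric] fL' Y x(3) lm' mu xY] show ?thesis by simp
  qed
  then have "vspan {A c, A d} \<subseteq> vspan (A ` Y)" by (intro vspan_trans) auto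
  moreover have "A ` L \<subseteq> vspan (A ` L)" using cd(6) finE finite_subset
    by (auto intro!: vspan_mem)
  ultimately show ?thesis using line_span[OF cd(1,2)] cd(4) by auto
qed

lemma lines_distinct:
  assumes L: "L \<in> lines_off A E L0 f" and x: "x \<noteq> (\<lambda>j. 0)" "x \<in> vspan (A ` L)" "x \<in> vspan {v, A f}"
    and L': "L' \<in> lines_off A E L0 f" and x': "x' \<noteq> (\<lambda>j. 0)" "x' \<in> vspan (A ` L')" "x' \<in> vspan {v, A f}"
    and par: "parallel x x'"
  shows "L = L'"
proof -
  obtain \<kappa> where k: "x = (\<lambda>j. \<kappa> * x' j)" using par unfolding parallel_def by blast
  have k0: "\<kappa> \<noteq> 0" using k x(1) by auto
  obtain c d where cd: "c \<in> E" "d \<in> E" "c \<noteq> d" "L = mcl A E {c, d}" "f \<notin> L" "L \<subseteq> E"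
    using line_cd[OF L] by blast
  obtain c' d' where cd': "c' \<in> E" "d' \<in> E" "c' \<noteq> d'" "L' = mcl A E {c', d'}" "f \<notin> L'" "L' \<subseteq> E"
    using line_cd[OF L'] by blast
  have "x \<in> vspan (A ` L')" using vspan_smult[OF x'(2), of \<kappa>] k by simp
  then have "A ` L \<subseteq> vspan (A ` L')" using line_lemma[OF L x(1-3) cd'(6)] by simp
  then have "L \<subseteq> L'" using cd cd' line_closed[OF cd'(1,2)] by blast
  moreover
  have "x' = (\<lambda>j. (1 / \<kappa>) * x j)" using k k0 by auto
  then have "x' \<in> vspan (A ` L)" using vspan_smult[OF x(2), of "1 / \<kappa>"] by simp
  then have "A ` L' \<subseteq> vspan (A ` L)" using line_lemma[OF L' x'(1-3) cd(6)] by simp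
  then have "L' \<subseteq> L" using cd cd' line_closed[OF cd(1,2)] by blast
  ultimately show ?thesis by simp
qed

definition Bv :: "nat \<Rightarrow> nat \<Rightarrow> 'a" where
  "Bv s = (if s = 0 then A a else if s = 1 then A b else A f)"

lemma Bsum: "(\<Sum>s\<in>{0,1,2}. c s * Bv s j) = c 0 * A a j + c 1 * A b j + c 2 * A f j"
  by (simp add: Bv_def)

lemma indepK:
  assumes "\<forall>j. (\<Sum>s\<in>{0,1,2}. c s * Bv s j) = 0"
  shows "c 0 = 0 \<and> c 1 = 0 \<and> c 2 = 0"
proof -
  have "\<forall>j. c 0 * A a j + c 1 * A b j + c 2 * A f j = 0" using assms Bsum[of c] by simp
  then show ?thesis by (rule indep3)
qed

lemma Bv_mem: "s \<in> {0,1,2} \<Longrightarrow> Bv s \<in> vspan {A a, A b, A f}"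
  by (auto simp: Bv_def intro: vspan_mem)

lemma Bv_span: "K0 \<subseteq> {0,1,2} \<Longrightarrow> (\<lambda>j. \<Sum>s\<in>K0. c s * Bv s j) \<in> vspan {A a, A b, A f}"
proof -
  assume K: "K0 \<subseteq> {0,1,2}"
  then have "finite K0" using finite_subset by blast
  moreover have "\<And>s. s \<in> K0 \<Longrightarrow> Bv s \<in> vspan {A a, A b, A f}" using K Bv_mem by blast
  ultimately show ?thesis by (rule vspan_sum)
qed

lemma Bv_S: "\<forall>j. Bv s j \<in> S" using AS ab fE by (simp add: Bv_def)
lemma Bv_n: "n \<le> j \<Longrightarrow> Bv s j = 0" using An ab fE by (simp add: Bv_def)

lemma rat_point:
  assumes Y: "Y \<subseteq> E" and K0: "K0 \<subseteq> {0,1,2}" "t \<in> K0" and xt: "xc t \<noteq> 0"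
    and xY: "(\<lambda>j. \<Sum>s\<in>K0. xc s * Bv s j) \<in> vspan (A ` Y)"
  shows "\<exists>D. (\<forall>s. D s \<in> S) \<and> D t \<noteq> 0 \<and> (\<lambda>j. \<Sum>s\<in>K0. D s * Bv s j) \<in> vspan (A ` Y)"
proof -
  have fY: "finite Y" using finY[OF Y] .
  have fK: "finite K0" using K0(1) finite_subset by blast
  obtain k where k: "\<forall>j. (\<Sum>s\<in>K0. xc s * Bv s j) = (\<Sum>y\<in>Y. k y * A y j)"
    using xY span_Y[OF Y] by auto
  define I where "I = Inl ` Y \<union> Inr ` K0"
  define U where "U = case_sum A Bv"
  define C where "C = case_sum k (\<lambda>s. - xc s)"
  have sI: "(\<Sum>i\<in>I. g i) = (\<Sum>y\<in>Y. g (Inl y)) + (\<Sum>s\<in>K0. g (Inr s))" for g :: "_ \<Rightarrow> 'a"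
    unfolding I_def using sum_plus[OF fY fK] by simp
  have rel: "\<forall>j. (\<Sum>i\<in>I. C i * U i j) = 0"
  proof
    fix j
    have "(\<Sum>i\<in>I. C i * U i j) = (\<Sum>y\<in>Y. k y * A y j) + (\<Sum>s\<in>K0. (- xc s) * Bv s j)"
      by (simp add: sI C_def U_def)
    also have "\<dots> = (\<Sum>y\<in>Y. k y * A y j) - (\<Sum>s\<in>K0. xc s * Bv s j)"
      by (simp add: sum_negf)
    finally show "(\<Sum>i\<in>I. C i * U i j) = 0" using k by simp
  qed
  have UI: "\<forall>i\<in>I. \<forall>j. U i j \<in> S" using AS Y Bv_S by (auto simp: I_def U_def)
  have fI: "finite I" "Inr t \<in> I" "C (Inr t) \<noteq> 0" using fY fK K0 xt by (auto simp: I_def C_def)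
  obtain D where D: "\<forall>i. D i \<in> S" "\<forall>j. (\<Sum>i\<in>I. D i * U i j) = 0" "D (Inr t) \<noteq> 0"
    using rational_dep[OF S fI(1,2) UI rel fI(3)] by blast
  have "\<forall>j. (\<Sum>s\<in>K0. D (Inr s) * Bv s j) = (\<Sum>y\<in>Y. (- D (Inl y)) * A y j)"
  proof
    fix j
    have "(\<Sum>y\<in>Y. D (Inl y) * A y j) + (\<Sum>s\<in>K0. D (Inr s) * Bv s j) = 0"
      using D(2) by (simp add: sI U_def)
    then show "(\<Sum>s\<in>K0. D (Inr s) * Bv s j) = (\<Sum>y\<in>Y. (- D (Inl y)) * A y j)"
      by (simp add: sum_negf eq_neg_iff_add_eq_0 add.commute)
  qed
  then have "(\<lambda>j. \<Sum>s\<in>K0. D (Inr s) * Bv s j) \<in> vspan (A ` Y)"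
    unfolding span_Y[OF Y] by (rule exI[of _ "\<lambda>y. - D (Inl y)"])
  then show ?thesis using D(1,3) by (intro exI[of _ "\<lambda>s. D (Inr s)"]) auto
qed

end


context pgsetup
begin

lemma indepK':
  assumes "\<forall>j. (\<Sum>s\<in>{0,1,2}. c s * Bv s j) = 0" "s \<in> {0,1,2}"
  shows "c s = 0"
  using indepK[OF assms(1)] assms(2) by auto

lemma sumK':
  assumes "t \<in> {0,1,2::nat}"
  shows "(\<Sum>s\<in>{0,1,2}-{t}. c s * Bv s j) = (\<Sum>s\<in>{0,1,2}. (if s = t then 0 else c s) * Bv s j)"
proof -
  have "(\<Sum>s\<in>{0,1,2}. (if s = t then 0 else c s) * Bv s j) = (\<Sum>s\<in>{0,1,2}-{t}. (if s = t then 0 else c s) * Bv s j)"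
    by (rule sum.mono_neutral_right) auto
  also have "\<dots> = (\<Sum>s\<in>{0,1,2}-{t}. c s * Bv s j)" by (rule sum.cong) auto
  finally show ?thesis by simp
qed

lemma Svec_B:
  fixes D :: "nat \<Rightarrow> 'a"
  assumes "\<forall>s. D s \<in> S"
  shows "\<forall>j. (\<Sum>s\<in>{0,1,2}. D s * Bv s j) \<in> S" "\<forall>j. n \<le> j \<longrightarrow> (\<Sum>s\<in>{0,1,2}. D s * Bv s j) = 0"
  using assms Bv_S Bv_n subfield_closed[OF S] by (auto simp: Bsum)

lemma two_lemma:
  assumes Y: "Y \<subseteq> E" and x: "x \<in> vspan {v, A f}" "x \<noteq> (\<lambda>j. 0)" "x \<in> vspan (A ` Y)"
  shows "A f \<in> vspan (A ` Y) \<or> (\<exists>g\<in>E. \<exists>h\<in>E. g \<noteq> h \<and> A g \<in> vspan (A ` Y) \<and> A h \<in> vspan (A ` Y) \<and>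
           A g \<in> vspan {A a, A b, A f} \<and> A h \<in> vspan {A a, A b, A f})"
proof -
  let ?K = "{0,1,2::nat}"
  obtain \<alpha> \<beta> where ab': "\<forall>j. x j = \<alpha> * v j + \<beta> * A f j" using x(1) vspan_two by blast
  obtain \<gamma> \<delta> where gd: "\<forall>j. v j = \<gamma> * A a j + \<delta> * A b j" using v_coords by blast
  define xc where "xc (s::nat) = (if s = 0 then \<alpha> * \<gamma> else if s = 1 then \<alpha> * \<delta> else \<beta>)" for s
  have xB: "x = (\<lambda>j. \<Sum>s\<in>?K. xc s * Bv s j)"
    using ab' gd by (auto simp: fun_eq_iff Bv_def xc_def algebra_simps)
  obtain t where t: "t \<in> ?K" "xc t \<noteq> 0"
  proof -
    have "\<exists>t\<in>?K. xc t \<noteq> 0"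
    proof (rule ccontr)
      assume "\<not> (\<exists>t\<in>?K. xc t \<noteq> 0)"
      then have "x = (\<lambda>j. 0)" using xB by simp
      then show False using x(2) by simp
    qed
    then show ?thesis using that by blast
  qed
  have xY: "(\<lambda>j. \<Sum>s\<in>?K. xc s * Bv s j) \<in> vspan (A ` Y)" using x(3) xB by simp
  obtain D where D: "\<forall>s. D s \<in> S" "D t \<noteq> 0" "(\<lambda>j. \<Sum>s\<in>?K. D s * Bv s j) \<in> vspan (A ` Y)"
    using rat_point[OF Y _ t(1) t(2) xY] by blast
  define p where "p = (\<lambda>j. \<Sum>s\<in>?K. D s * Bv s j)"
  have pY: "p \<in> vspan (A ` Y)" using D(3) by (simp add: p_def)
  have pnz: "p \<noteq> (\<lambda>j. 0)"
  proof
    assume "p = (\<lambda>j. 0)"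
    then have "\<forall>j. (\<Sum>s\<in>?K. D s * Bv s j) = 0" by (simp add: p_def fun_eq_iff)
    then have "D t = 0" using indepK' t(1) by blast
    then show False using D(2) by simp
  qed
  have pS: "\<forall>j. p j \<in> S" "\<forall>j. n \<le> j \<longrightarrow> p j = 0" using Svec_B[OF D(1)] by (simp_all add: p_def)
  obtain g \<kappa> where g: "g \<in> E" "\<kappa> \<noteq> 0" "\<forall>j. p j = \<kappa> * A g j" using Apt'[OF pS pnz] by blast
  have Ag: "A g = (\<lambda>j. (1 / \<kappa>) * p j)" using g by (auto simp: fun_eq_iff)
  have AgY: "A g \<in> vspan (A ` Y)" unfolding Ag by (rule vspan_smult[OF pY])
  have AgP: "A g \<in> vspan {A a, A b, A f}" unfolding Ag p_def by (rule vspan_smult[OF Bv_span]) simp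
  show ?thesis
  proof (cases "\<exists>\<rho>. x = (\<lambda>j. \<rho> * p j)")
    case True
    then obtain \<rho> where r: "x = (\<lambda>j. \<rho> * p j)" by blast
    have r0: "\<rho> \<noteq> 0" using r x(2) by auto
    have "A g = (\<lambda>j. (1 / (\<kappa> * \<rho>)) * x j)" using Ag r r0 by (auto simp: fun_eq_iff)
    then have "A g \<in> vspan {v, A f}" using vspan_smult[OF x(1), of "1 / (\<kappa> * \<rho>)"] by simp
    then have "g = f" using pt_on_l g(1) by blast
    then show ?thesis using AgY by simp
  next
    case False
    define \<rho> where "\<rho> = xc t / D t"
    define xc' where "xc' s = xc s - \<rho> * D s" for s
    have xc't: "xc' t = 0" using D(2) by (simp add: xc'_def \<rho>_def)
    have x'eq: "(\<lambda>j. \<Sum>s\<in>?K. xc' s * Bv s j) = (\<lambda>j. 1 * x j + (- \<rho>) * p j)"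
      by (auto simp: fun_eq_iff xB p_def xc'_def Bv_def algebra_simps)
    have x'Y: "(\<lambda>j. \<Sum>s\<in>?K. xc' s * Bv s j) \<in> vspan (A ` Y)"
      unfolding x'eq by (rule vspan_lin[OF x(3) pY])
    define K' where "K' = ?K - {t}"
    have sK: "(\<Sum>s\<in>K'. xc' s * Bv s j) = (\<Sum>s\<in>?K. xc' s * Bv s j)" for j
      unfolding K'_def sumK'[OF t(1)] using xc't by (intro sum.cong) auto
    have x'Y': "(\<lambda>j. \<Sum>s\<in>K'. xc' s * Bv s j) \<in> vspan (A ` Y)" using x'Y sK by simp
    obtain s0 where s0: "s0 \<in> K'" "xc' s0 \<noteq> 0"
    proof -
      have "\<exists>s0\<in>K'. xc' s0 \<noteq> 0"
      proof (rule ccontr)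
        assume "\<not> (\<exists>s0\<in>K'. xc' s0 \<noteq> 0)"
        then have "(\<lambda>j. \<Sum>s\<in>K'. xc' s * Bv s j) = (\<lambda>j. 0)" by simp
        then have "(\<lambda>j. 1 * x j + (- \<rho>) * p j) = (\<lambda>j. 0)" using sK x'eq by (simp add: fun_eq_iff)
        then have "x = (\<lambda>j. \<rho> * p j)" by (auto simp: fun_eq_iff)
        then show False using False by blast
      qed
      then show ?thesis using that by blast
    qed
    obtain D' where D': "\<forall>s. D' s \<in> S" "D' s0 \<noteq> 0" "(\<lambda>j. \<Sum>s\<in>K'. D' s * Bv s j) \<in> vspan (A ` Y)"
      using rat_point[OF Y _ s0(1) s0(2) x'Y'] by (auto simp: K'_def)
    define D'' where "D'' s = (if s = t then 0 else D' s)" for s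
    define r where "r = (\<lambda>j. \<Sum>s\<in>?K. D'' s * Bv s j)"
    have rK: "r = (\<lambda>j. \<Sum>s\<in>K'. D' s * Bv s j)"
      unfolding r_def K'_def sumK'[OF t(1)] D''_def by simp
    have rY: "r \<in> vspan (A ` Y)" using D'(3) rK by simp
    have D''S: "\<forall>s. D'' s \<in> S" using D'(1) subfield_closed[OF S] by (simp add: D''_def)
    have s0t: "s0 \<noteq> t" "s0 \<in> ?K" using s0(1) by (auto simp: K'_def)
    have rnz: "r \<noteq> (\<lambda>j. 0)"
    proof
      assume "r = (\<lambda>j. 0)"
      then have "\<forall>j. (\<Sum>s\<in>?K. D'' s * Bv s j) = 0" by (simp add: r_def fun_eq_iff)
      then have "D'' s0 = 0" using indepK' s0t(2) by blast
      then show False using D'(2) s0t by (simp add: D''_def)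
    qed
    have rS: "\<forall>j. r j \<in> S" "\<forall>j. n \<le> j \<longrightarrow> r j = 0" using Svec_B[OF D''S] by (simp_all add: r_def)
    obtain h \<kappa>' where h: "h \<in> E" "\<kappa>' \<noteq> 0" "\<forall>j. r j = \<kappa>' * A h j" using Apt'[OF rS rnz] by blast
    have Ah: "A h = (\<lambda>j. (1 / \<kappa>') * r j)" using h by (auto simp: fun_eq_iff)
    have AhY: "A h \<in> vspan (A ` Y)" unfolding Ah by (rule vspan_smult[OF rY])
    have AhP: "A h \<in> vspan {A a, A b, A f}" unfolding Ah r_def by (rule vspan_smult[OF Bv_span]) simp
    have gh: "g \<noteq> h"
    proof
      assume "g = h"
      then have "\<forall>j. p j = (\<kappa> / \<kappa>') * r j" using g h by (auto simp: field_simps)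
      then have "\<forall>j. (\<Sum>s\<in>?K. (D s - (\<kappa> / \<kappa>') * D'' s) * Bv s j) = 0"
        by (simp add: p_def r_def Bv_def algebra_simps)
      from indepK'[OF this t(1)] have "D t - (\<kappa> / \<kappa>') * D'' t = 0" by simp
      then show False using D(2) by (simp add: D''_def)
    qed
    show ?thesis using g(1) h(1) gh AgY AhY AgP AhP by blast
  qed
qed

lemma P_sub:
  assumes "e \<in> mcl A E (L0 \<union> {f})"
  shows "A e \<in> vspan {A a, A b, A f}"
proof -
  have fin: "finite (A ` (L0 \<union> {f}))" using finE mcl_sub L0 fE
    by (metis finite_imageI finite_subset insert_subset sup.commute insert_is_Un)
  have sub: "{A a, A b} \<subseteq> vspan {A a, A b, A f}" by (auto intro: vspan_mem)
  have "A ` (L0 \<union> {f}) \<subseteq> vspan {A a, A b, A f}"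
  proof
    fix w assume "w \<in> A ` (L0 \<union> {f})"
    then obtain e' where e': "e' \<in> L0 \<union> {f}" "w = A e'" by blast
    show "w \<in> vspan {A a, A b, A f}"
    proof (cases "e' = f")
      case True then show ?thesis using e' by (auto intro: vspan_mem)
    next
      case False
      then have "e' \<in> L0" using e' by simp
      then have "A e' \<in> vspan {A a, A b}" unfolding L0 mcl_def by simp
      then show ?thesis using e' vspan_trans[OF _ sub] by auto
    qed
  qed
  moreover have "A e \<in> vspan (A ` (L0 \<union> {f}))" using assms by (simp add: mcl_def)
  ultimately show ?thesis using vspan_trans[OF fin] by blast
qed

lemma v_P: "v \<in> vspan {A a, A b, A f}"
proof -
  obtain \<gamma> \<delta> where gd: "\<forall>j. v j = \<gamma> * A a j + \<delta> * A b j" using v_coords by blast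
  then have "\<forall>j. v j = \<gamma> * A a j + \<delta> * A b j + 0 * A f j" by simp
  then show ?thesis unfolding vspan_three by blast
qed

lemma card3: "card {x, y, z :: 'c} \<le> 3"
  by (auto simp: card_insert_if)

lemma exists_vL:
  assumes L: "L \<in> lines_off A E L0 f"
  shows "\<exists>w. w \<noteq> (\<lambda>j. 0) \<and> w \<in> vspan (A ` L) \<and> w \<in> vspan {v, A f}"
proof -
  obtain c d where cd: "c \<in> E" "d \<in> E" "c \<noteq> d" "L = mcl A E {c, d}" "f \<notin> L" "L \<subseteq> E"
    using line_cd[OF L] by blast
  have LP: "L \<subseteq> mcl A E (L0 \<union> {f})" using L by (simp add: lines_off_def)
  have cP: "A c \<in> vspan {A a, A b, A f}" "A d \<in> vspan {A a, A b, A f}"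
    using P_sub LP line_mem[OF cd(1,2)] cd(4) by auto
  define u where "u i = (if i = (0::nat) then A c else if i = 1 then A d else if i = 2 then v else A f)" for i
  have uW: "\<forall>i\<in>{0,1,2,3}. u i \<in> vspan {A a, A b, A f}"
    using cP v_P by (auto simp: u_def intro: vspan_mem)
  have "card {A a, A b, A f} < card {0,1,2,3::nat}" using card3[of "A a" "A b" "A f"] by simp
  then have "\<not> lin_indep_fam u {0,1,2,3}" using steinitz[OF _ _ _ uW] by simp
  then obtain k i0 where k: "\<forall>j. (\<Sum>i\<in>{0,1,2,3}. k i * u i j) = 0" "i0 \<in> {0,1,2,3::nat}" "k i0 \<noteq> 0"
    unfolding dep_iff by auto
  have k': "\<forall>j. k 0 * A c j + k 1 * A d j + k 2 * v j + k 3 * A f j = 0"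
    using k(1) by (simp add: u_def add.assoc)
  define w where "w j = k 0 * A c j + k 1 * A d j" for j
  have wnz: "w \<noteq> (\<lambda>j. 0)"
  proof
    assume w0: "w = (\<lambda>j. 0)"
    then have "k 0 = 0 \<and> k 1 = 0" using indep2[OF cd(1-3), of "k 0" "k 1"] by (auto simp: w_def fun_eq_iff)
    then have kv: "\<forall>j. k 2 * v j + k 3 * A f j = 0" using k' by simp
    obtain \<gamma> \<delta> where gd: "\<forall>j. v j = \<gamma> * A a j + \<delta> * A b j" using v_coords by blast
    have "\<forall>j. (k 2 * \<gamma>) * A a j + (k 2 * \<delta>) * A b j + k 3 * A f j = 0"
      using kv gd by (simp add: algebra_simps)
    then have z: "k 2 * \<gamma> = 0" "k 2 * \<delta> = 0" "k 3 = 0" using indep3 by blast+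
    have "k 2 = 0"
    proof (rule ccontr)
      assume "k 2 \<noteq> 0"
      then have "\<gamma> = 0" "\<delta> = 0" using z by auto
      then have "v = (\<lambda>j. 0)" using gd by auto
      then show False using v_nz by simp
    qed
    then show False using k(2,3) z \<open>k 0 = 0 \<and> k 1 = 0\<close> by auto
  qed
  have "w \<in> vspan {A c, A d}" unfolding vspan_two w_def by blast
  then have "w \<in> vspan (A ` L)" using line_span[OF cd(1,2)] cd(4) by simp
  moreover have "\<forall>j. w j = (- k 2) * v j + (- k 3) * A f j"
    using k' by (simp add: w_def algebra_simps eq_neg_iff_add_eq_0)
  then have "w \<in> vspan {v, A f}" unfolding vspan_two by blast
  ultimately show ?thesis using wnz by blast
qed

end


lemma indep_cong:
  assumes "\<And>i. i \<in> X \<Longrightarrow> u i = u' i"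
  shows "lin_indep_fam u X \<longleftrightarrow> lin_indep_fam u' X"
proof -
  have "(\<Sum>i\<in>X. c i * u i j) = (\<Sum>i\<in>X. c i * u' i j)" for c j
    using assms by (intro sum.cong) auto
  then show ?thesis unfolding lin_indep_fam_def by simp
qed

lemma pg_sum:
  assumes "finite Y" "finite Z"
  shows "(\<Sum>x\<in>Inl ` Y \<union> Inr ` Z. c x * pgbar_cols A w x j) =
         (\<Sum>y\<in>Y. c (Inl y) * A y j) + (\<Sum>L\<in>Z. c (Inr L) * w L j)"
  using sum_plus[OF assms, of "\<lambda>x. c x * pgbar_cols A w x j"] by (simp add: pgbar_cols_def)

lemma card_image_Inl_Inr:
  fixes Y :: "'y set" and Z :: "'z set"
  assumes "finite Y" "finite Z"
  shows "card (Inl ` Y \<union> Inr ` Z :: ('y + 'z) set) = card Y + card Z"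
proof -
  have d: "(Inl ` Y :: ('y + 'z) set) \<inter> Inr ` Z = {}" by blast
  have "card (Inl ` Y \<union> Inr ` Z :: ('y + 'z) set) = card (Inl ` Y :: ('y + 'z) set) + card (Inr ` Z :: ('y + 'z) set)"
    using assms d by (intro card_Un_disjoint) auto
  then show ?thesis by (simp add: card_image)
qed

locale twosetup =
  s1: pgsetup S n A E L0 a b f v + s2: pgsetup T n A' E L0 a b f v'
  for S :: "'a::field set" and n and A :: "'e \<Rightarrow> nat \<Rightarrow> 'a" and E L0 a b f v
    and T :: "'b::field set" and A' :: "'e \<Rightarrow> nat \<Rightarrow> 'b" and v' +
  fixes \<sigma> :: "'a \<Rightarrow> 'b" and vL :: "'e set \<Rightarrow> nat \<Rightarrow> 'a" and vL' :: "'e set \<Rightarrow> nat \<Rightarrow> 'b"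
  assumes iso: "fiso S T \<sigma>" and A'A: "\<forall>e\<in>E. \<forall>j. A' e j = \<sigma> (A e j)"
    and vL: "\<forall>L\<in>lines_off A E L0 f. vL L \<noteq> (\<lambda>j. 0) \<and> vL L \<in> vspan (A ` L) \<and> vL L \<in> vspan {v, A f}"
    and vL': "\<forall>L\<in>lines_off A E L0 f. vL' L \<in> vspan (A' ` L) \<and> vL' L \<in> vspan {v', A' f}"
begin

lemma A'_eq: "e \<in> E \<Longrightarrow> A' e = (\<lambda>j. \<sigma> (A e j))"
  using A'A by auto

lemma span_transfer:
  assumes Y: "Y \<subseteq> E" and e: "e \<in> E" and sp: "A e \<in> vspan (A ` Y)"
  shows "A' e \<in> vspan (A' ` Y)"
proof -
  have img: "(\<lambda>e j. \<sigma> (A e j)) ` Y = A' ` Y"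
    by (rule image_cong) (use A'_eq Y in auto)
  have inj: "inj_on (\<lambda>e j. \<sigma> (A e j)) Y"
    using s2.inj_Y[OF Y] A'_eq Y by (simp add: inj_on_def) (metis subsetD)
  have "(\<lambda>j. \<sigma> (A e j)) \<in> vspan ((\<lambda>e j. \<sigma> (A e j)) ` Y)"
    by (rule fiso_span[OF s1.S s2.S iso s1.finY[OF Y] s1.inj_Y[OF Y] inj])
      (use s1.AS Y e sp in auto)
  then show ?thesis using img A'_eq[OF e] by simp
qed

lemma dep_transfer:
  assumes Y: "Y \<subseteq> E" and dep: "\<not> lin_indep_fam A Y"
  shows "\<not> lin_indep_fam A' Y"
proof -
  have "\<not> lin_indep_fam (\<lambda>i j. \<sigma> (A i j)) Y"
    by (rule fiso_dep[OF s1.S s2.S iso s1.finY[OF Y] _ dep]) (use s1.AS Y in auto)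
  moreover have "lin_indep_fam (\<lambda>i j. \<sigma> (A i j)) Y \<longleftrightarrow> lin_indep_fam A' Y"
    using A'_eq Y by (intro indep_cong) auto
  ultimately show ?thesis by simp
qed

lemma single:
  assumes L: "L \<in> lines_off A E L0 f" and Y: "Y \<subseteq> E" and xY: "vL L \<in> vspan (A ` Y)"
  shows "\<not> lin_indep_fam (pgbar_cols A' vL') (Inl ` Y \<union> Inr ` {L})"
proof -
  obtain c d where cd: "c \<in> E" "d \<in> E" "c \<noteq> d" "L = mcl A E {c, d}" "f \<notin> L" "L \<subseteq> E"
    using s1.line_cd[OF L] by blast
  have sub: "A ` L \<subseteq> vspan (A ` Y)" using s1.line_lemma[OF L _ _ _ Y xY] vL L by blast
  have "A c \<in> vspan (A ` Y)" "A d \<in> vspan (A ` Y)"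
    using sub s1.line_mem[OF cd(1,2)] cd(4) by auto
  then have c': "A' c \<in> vspan (A' ` Y)" "A' d \<in> vspan (A' ` Y)"
    using span_transfer[OF Y] cd by auto
  have "A' ` L \<subseteq> vspan {A' c, A' d}"
  proof
    fix w assume "w \<in> A' ` L"
    then obtain e where e: "e \<in> L" "w = A' e" by blast
    have "A e \<in> vspan (A ` {c, d})" using e(1) cd(4) by (simp add: mcl_def)
    moreover have "{c, d} \<subseteq> E" "e \<in> E" using cd e(1) by auto
    ultimately have "A' e \<in> vspan (A' ` {c, d})" using span_transfer[of "{c, d}" e] by simp
    then show "w \<in> vspan {A' c, A' d}" using e by simp
  qed
  moreover have "finite L" using cd(6) s2.finE finite_subset by blast
  ultimately have "vspan (A' ` L) \<subseteq> vspan {A' c, A' d}"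
    by (intro vspan_trans) auto
  moreover have "vspan {A' c, A' d} \<subseteq> vspan (A' ` Y)"
    using c' by (intro vspan_trans) auto
  ultimately have wY: "vL' L \<in> vspan (A' ` Y)" using vL' L by blast
  have fY: "finite Y" using s1.finY[OF Y] .
  show ?thesis
  proof (rule steinitz)
    show "finite (A' ` Y)" using fY by simp
    show "finite (Inl ` Y \<union> Inr ` {L})" using fY by simp
    show "card (A' ` Y) < card (Inl ` Y \<union> Inr ` {L})"
      using card_image_Inl_Inr[OF fY, of "{L}"] card_image_le[OF fY, of A'] by simp
    show "\<forall>i\<in>Inl ` Y \<union> Inr ` {L}. pgbar_cols A' vL' i \<in> vspan (A' ` Y)"
      using wY fY by (auto simp: pgbar_cols_def intro: vspan_mem)
  qed
qed


lemma pair_case: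
  assumes L: "L \<in> lines_off A E L0 f" and L': "L' \<in> lines_off A E L0 f" and LL: "L \<noteq> L'"
    and Y: "Y \<subseteq> E"
    and rel: "\<forall>j. (\<Sum>y\<in>Y. cy y * A y j) + cL * vL L j + cL' * vL L' j = 0"
    and c0: "cL \<noteq> 0" "cL' \<noteq> 0"
  shows "\<not> lin_indep_fam (pgbar_cols A' vL') (Inl ` Y \<union> Inr ` {L, L'})"
proof -
  have fY: "finite Y" using s1.finY[OF Y] .
  define x where "x j = cL * vL L j + cL' * vL L' j" for j
  have xY: "x \<in> vspan (A ` Y)"
  proof -
    have "\<forall>j. x j = (\<Sum>y\<in>Y. (- cy y) * A y j)"
      using rel by (simp add: x_def sum_negf eq_neg_iff_add_eq_0 add.commute add.left_commute)
    then show ?thesis unfolding s1.span_Y[OF Y] by (rule exI[of _ "\<lambda>y. - cy y"])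
  qed
  have xl: "x \<in> vspan {v, A f}" unfolding x_def using vL L L' by (intro vspan_lin) auto
  have xnz: "x \<noteq> (\<lambda>j. 0)"
  proof
    assume "x = (\<lambda>j. 0)"
    then have "vL L = (\<lambda>j. (- cL' / cL) * vL L' j)" using c0
      by (auto simp: x_def fun_eq_iff field_simps dest!: fun_cong eq_neg_iff_add_eq_0[THEN iffD2])
    then have "parallel (vL L) (vL L')" unfolding parallel_def by blast
    then have "L = L'" using s1.lines_distinct[OF L _ _ _ L'] vL L L' by blast
    then show False using LL by simp
  qed
  have fi: "finite (Inl ` Y \<union> Inr ` {L, L'})" using fY by simp
  have ci: "card (Inl ` Y \<union> Inr ` {L, L'}) = card Y + 2"
    using card_image_Inl_Inr[OF fY, of "{L, L'}"] LL by simp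
  from s1.two_lemma[OF Y xl xnz xY] show ?thesis
  proof
    assume "A f \<in> vspan (A ` Y)"
    then have fY': "A' f \<in> vspan (A' ` Y)" using span_transfer[OF Y s1.fE] by simp
    define W where "W = insert v' (A' ` Y)"
    have fW: "finite W" using fY by (simp add: W_def)
    have cW: "card W < card (Inl ` Y \<union> Inr ` {L, L'})"
    proof -
      have "card W \<le> Suc (card (A' ` Y))" unfolding W_def using fY by (simp add: card_insert_if)
      moreover have "card (A' ` Y) \<le> card Y" using card_image_le[OF fY] .
      ultimately show ?thesis using ci by simp
    qed
    have YW: "A' ` Y \<subseteq> vspan W" using fW by (auto simp: W_def intro: vspan_mem)
    have "vspan (A' ` Y) \<subseteq> vspan W" using YW fY by (intro vspan_trans) auto
    then have "{v', A' f} \<subseteq> vspan W" using fY' fW by (auto simp: W_def intro: vspan_mem)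
    then have lW: "vspan {v', A' f} \<subseteq> vspan W" by (intro vspan_trans) auto
    show ?thesis
    proof (rule steinitz[OF fW fi cW])
      show "\<forall>i\<in>Inl ` Y \<union> Inr ` {L, L'}. pgbar_cols A' vL' i \<in> vspan W"
        using YW lW vL' L L' by (auto simp: pgbar_cols_def)
    qed
  next
    assume "\<exists>g\<in>E. \<exists>h\<in>E. g \<noteq> h \<and> A g \<in> vspan (A ` Y) \<and> A h \<in> vspan (A ` Y) \<and>
           A g \<in> vspan {A a, A b, A f} \<and> A h \<in> vspan {A a, A b, A f}"
    then obtain g h where gh: "g \<in> E" "h \<in> E" "g \<noteq> h" "A g \<in> vspan (A ` Y)" "A h \<in> vspan (A ` Y)"
      "A g \<in> vspan (A ` {a, b, f})" "A h \<in> vspan (A ` {a, b, f})" by auto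
    have abf: "{a, b, f} \<subseteq> E" using s1.ab s1.fE by auto
    have g': "A' g \<in> vspan (A' ` Y)" "A' h \<in> vspan (A' ` Y)"
      using span_transfer[OF Y] gh by auto
    have g'': "A' g \<in> vspan {A' a, A' b, A' f}" "A' h \<in> vspan {A' a, A' b, A' f}"
      using span_transfer[OF abf] gh by auto
    have lP: "vspan {v', A' f} \<subseteq> vspan {A' a, A' b, A' f}"
      using s2.v_P by (intro vspan_trans) (auto intro: vspan_mem)
    define u where "u i = (if i = (0::nat) then vL' L else if i = 1 then vL' L' else if i = 2 then A' g else A' h)" for i
    have uW: "\<forall>i\<in>{0,1,2,3}. u i \<in> vspan {A' a, A' b, A' f}"
      using g'' lP vL' L L' by (auto simp: u_def)
    have "card {A' a, A' b, A' f} < card {0,1,2,3::nat}" using s1.card3[of "A' a" "A' b" "A' f"] by simp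
    then have "\<not> lin_indep_fam u {0,1,2,3}" using steinitz[OF _ _ _ uW] by simp
    then obtain k i0 where k: "\<forall>j. (\<Sum>i\<in>{0,1,2,3}. k i * u i j) = 0" "i0 \<in> {0,1,2,3::nat}" "k i0 \<noteq> 0"
      unfolding dep_iff by auto
    have k': "\<forall>j. k 0 * vL' L j + k 1 * vL' L' j + (k 2 * A' g j + k 3 * A' h j) = 0"
      using k(1) by (simp add: u_def add.assoc)
    have k01: "k 0 \<noteq> 0 \<or> k 1 \<noteq> 0"
    proof (rule ccontr)
      assume "\<not> (k 0 \<noteq> 0 \<or> k 1 \<noteq> 0)"
      then have "\<forall>j. k 2 * A' g j + k 3 * A' h j = 0" using k' by simp
      then have "k 2 = 0 \<and> k 3 = 0" using s2.indep2[OF gh(1-3)] by blast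
      then show False using k(2,3) \<open>\<not> (k 0 \<noteq> 0 \<or> k 1 \<noteq> 0)\<close> by auto
    qed
    have "(\<lambda>j. k 2 * A' g j + k 3 * A' h j) \<in> vspan (A' ` Y)" using g' by (rule vspan_lin)
    then obtain ay where ay: "\<forall>j. k 2 * A' g j + k 3 * A' h j = (\<Sum>y\<in>Y. ay y * A' y j)"
      unfolding s2.span_Y[OF Y] by auto
    define C where "C = case_sum ay (\<lambda>M. if M = L then k 0 else k 1)"
    have "\<forall>j. (\<Sum>i\<in>Inl ` Y \<union> Inr ` {L, L'}. C i * pgbar_cols A' vL' i j) = 0"
    proof
      fix j
      have "(\<Sum>i\<in>Inl ` Y \<union> Inr ` {L, L'}. C i * pgbar_cols A' vL' i j)
          = (\<Sum>y\<in>Y. ay y * A' y j) + (k 0 * vL' L j + k 1 * vL' L' j)"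
        using pg_sum[OF fY, of "{L, L'}" C A' vL' j] LL by (simp add: C_def)
      then show "(\<Sum>i\<in>Inl ` Y \<union> Inr ` {L, L'}. C i * pgbar_cols A' vL' i j) = 0"
        using ay k' by (simp add: add.commute)
    qed
    moreover have "\<exists>i\<in>Inl ` Y \<union> Inr ` {L, L'}. C i \<noteq> 0"
      using k01 LL by (auto simp: C_def)
    ultimately show ?thesis unfolding dep_iff by blast
  qed
qed


lemma indep_Inl:
  assumes "lin_indep_fam (pgbar_cols A' w) (Inl ` Y)"
  shows "lin_indep_fam A' Y"
proof -
  have fin: "finite (Inl ` Y :: ('e + 'e set) set)" using assms unfolding lin_indep_fam_def by blast
  then have fY: "finite Y" using finite_imageD inj_Inl by (metis inj_on_subset subset_UNIV)
  show ?thesis unfolding lin_indep_fam_def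
  proof (intro conjI allI impI fY)
    fix c assume c: "\<forall>j. (\<Sum>i\<in>Y. c i * A' i j) = 0"
    define c' where "c' = (case_sum c (\<lambda>_. 0) :: 'e + 'e set \<Rightarrow> 'b)"
    have "\<forall>j. (\<Sum>x\<in>Inl ` Y. c' x * pgbar_cols A' w x j) = 0"
      using c by (simp add: sum.reindex c'_def pgbar_cols_def)
    then have "\<forall>x\<in>Inl ` Y. c' x = 0" using assms unfolding lin_indep_fam_def by blast
    then show "\<forall>i\<in>Y. c i = 0" by (simp add: c'_def)
  qed
qed

theorem transfer_main:
  assumes X: "X \<subseteq> pgbar_ground E (lines_off A E L0 f)"
    and dep: "\<not> lin_indep_fam (pgbar_cols A vL) X"
  shows "\<not> lin_indep_fam (pgbar_cols A' vL') X"
proof -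
  define Ls where "Ls = lines_off A E L0 f"
  have LsE: "L \<in> Ls \<Longrightarrow> L \<subseteq> E" for L unfolding Ls_def using s1.line_cd by metis
  have finLs: "finite Ls"
  proof -
    have "Ls \<subseteq> Pow E" using LsE by auto
    then show ?thesis using s1.finE finite_subset by blast
  qed
  define Y where "Y = {e. Inl e \<in> X}"
  define Z where "Z = {L. Inr L \<in> X}"
  have XYZ: "X = Inl ` Y \<union> Inr ` Z"
  proof
    show "X \<subseteq> Inl ` Y \<union> Inr ` Z"
    proof
      fix x assume "x \<in> X"
      then show "x \<in> Inl ` Y \<union> Inr ` Z" by (cases x) (auto simp: Y_def Z_def)
    qed
  qed (auto simp: Y_def Z_def)
  have Y: "Y \<subseteq> E" and Z: "Z \<subseteq> Ls" using X by (auto simp: Y_def Z_def pgbar_ground_def Ls_def)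
  have fY: "finite Y" using s1.finY[OF Y] .
  have fZ: "finite Z" using finLs Z finite_subset by blast
  have fX: "finite X" using XYZ fY fZ by simp
  obtain c x0 where c: "\<forall>j. (\<Sum>x\<in>X. c x * pgbar_cols A vL x j) = 0" "x0 \<in> X" "c x0 \<noteq> 0"
    using dep fX unfolding dep_iff by blast
  have rel: "\<forall>j. (\<Sum>y\<in>Y. c (Inl y) * A y j) + (\<Sum>L\<in>Z. c (Inr L) * vL L j) = 0"
  proof
    fix j
    have "(\<Sum>x\<in>Inl ` Y \<union> Inr ` Z. c x * pgbar_cols A vL x j) = 0" using c(1) XYZ by simp
    then show "(\<Sum>y\<in>Y. c (Inl y) * A y j) + (\<Sum>L\<in>Z. c (Inr L) * vL L j) = 0"
      using pg_sum[OF fY fZ, of c A vL j] by simp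
  qed
  show ?thesis
  proof (cases "lin_indep_fam A Y")
    case False
    then have "\<not> lin_indep_fam A' Y" by (rule dep_transfer[OF Y])
    then have "\<not> lin_indep_fam (pgbar_cols A' vL') (Inl ` Y)" using indep_Inl by blast
    then show ?thesis using dep_sub[of "Inl ` Y" X] XYZ fX by blast
  next
    case True
    have Znz: "\<exists>L\<in>Z. c (Inr L) \<noteq> 0"
    proof (rule ccontr)
      assume "\<not> (\<exists>L\<in>Z. c (Inr L) \<noteq> 0)"
      then have "\<forall>j. (\<Sum>y\<in>Y. c (Inl y) * A y j) = 0" using rel by simp
      then have "\<forall>y\<in>Y. c (Inl y) = 0"
        using True[unfolded lin_indep_fam_def, THEN conjunct2, rule_format, of "\<lambda>y. c (Inl y)"] by blast
      then show False using c(2,3) XYZ \<open>\<not> (\<exists>L\<in>Z. c (Inr L) \<noteq> 0)\<close> by auto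
    qed
    have singleX: "\<not> lin_indep_fam (pgbar_cols A' vL') X"
      if L: "L \<in> Z" and relL: "\<forall>j. (\<Sum>y\<in>Y. c (Inl y) * A y j) + c (Inr L) * vL L j = 0"
        and cL: "c (Inr L) \<noteq> 0" for L
    proof -
      have "\<forall>j. vL L j = (\<Sum>y\<in>Y. (- c (Inl y) / c (Inr L)) * A y j)"
      proof
        fix j
        have "c (Inr L) * vL L j = - (\<Sum>y\<in>Y. c (Inl y) * A y j)" using relL
          by (simp add: eq_neg_iff_add_eq_0 add.commute)
        then show "vL L j = (\<Sum>y\<in>Y. (- c (Inl y) / c (Inr L)) * A y j)" using cL
          by (simp add: field_simps sum_divide_distrib[symmetric] sum_negf)
      qed
      then have "vL L \<in> vspan (A ` Y)" unfolding s1.span_Y[OF Y]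
        by (rule exI[of _ "\<lambda>y. - c (Inl y) / c (Inr L)"])
      moreover have "L \<in> lines_off A E L0 f" using L Z by (auto simp: Ls_def)
      ultimately have "\<not> lin_indep_fam (pgbar_cols A' vL') (Inl ` Y \<union> Inr ` {L})"
        using single[OF _ Y] by blast
      moreover have "Inl ` Y \<union> Inr ` {L} \<subseteq> X" using XYZ L by auto
      ultimately show ?thesis using dep_sub fX by blast
    qed
    show ?thesis
    proof (cases "card Z \<ge> 3")
      case True
      then obtain T3 where T3: "T3 \<subseteq> Z" "card T3 = 3" by (meson obtain_subset_with_card_n)
      have fT: "finite T3" using T3 fZ finite_subset by blast
      have "\<not> lin_indep_fam (pgbar_cols A' vL') (Inr ` T3)"
      proof (rule steinitz)
        show "finite {v', A' f}" by simp
        show "finite (Inr ` T3)" using fT by simp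
        have "card {v', A' f} \<le> 2" by (simp add: card_insert_if)
        then show "card {v', A' f} < card (Inr ` T3)" using T3 by (simp add: card_image)
        show "\<forall>i\<in>Inr ` T3. pgbar_cols A' vL' i \<in> vspan {v', A' f}"
          using T3 Z vL' by (auto simp: pgbar_cols_def Ls_def)
      qed
      moreover have "Inr ` T3 \<subseteq> X" using XYZ T3 by auto
      ultimately show ?thesis using dep_sub fX by blast
    next
      case False
      then have "card Z = 0 \<or> card Z = 1 \<or> card Z = 2" by auto
      moreover have "card Z \<noteq> 0" using Znz fZ by auto
      ultimately consider "card Z = 1" | "card Z = 2" by blast
      then show ?thesis
      proof cases
        case 1
        then obtain L where L: "Z = {L}" by (rule card_1_singletonE)
        have cL: "c (Inr L) \<noteq> 0" using Znz L by simp
        have "\<forall>j. (\<Sum>y\<in>Y. c (Inl y) * A y j) + c (Inr L) * vL L j = 0" using rel L by simp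
        then show ?thesis using singleX[of L] L cL by simp
      next
        case 2
        then obtain L L' where LL: "Z = {L, L'}" "L \<noteq> L'" by (meson card_2_iff)
        have rel2: "\<forall>j. (\<Sum>y\<in>Y. c (Inl y) * A y j) + c (Inr L) * vL L j + c (Inr L') * vL L' j = 0"
          using rel LL by (simp add: add.assoc)
        show ?thesis
        proof (cases "c (Inr L) = 0")
          case True
          then have "c (Inr L') \<noteq> 0" using Znz LL by auto
          moreover have "\<forall>j. (\<Sum>y\<in>Y. c (Inl y) * A y j) + c (Inr L') * vL L' j = 0" using rel2 True by simp
          ultimately show ?thesis using singleX[of L'] LL by simp
        next
          case False
          show ?thesis
          proof (cases "c (Inr L') = 0")
            case True
            then have "\<forall>j. (\<Sum>y\<in>Y. c (Inl y) * A y j) + c (Inr L) * vL L j = 0" using rel2 by simp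
            then show ?thesis using singleX[of L] LL False by simp
          next
            case False': False
            have "\<not> lin_indep_fam (pgbar_cols A' vL') (Inl ` Y \<union> Inr ` {L, L'})"
              by (rule pair_case[OF _ _ LL(2) Y rel2 False False']) (use LL Z Ls_def in auto)
            then show ?thesis using XYZ LL by simp
          qed
        qed
      qed
    qed
  qed
qed

end


lemma mcl_transfer:
  assumes S: "subfield S" and T: "subfield T" and iso: "fiso S T \<sigma>"
    and P1: "pgrep S n A E" and P2: "pgrep T n A' E"
    and A'A: "\<forall>e\<in>E. \<forall>j. A' e j = \<sigma> (A e j)" and X: "X \<subseteq> E"
  shows "mcl A E X \<subseteq> mcl A' E X"
proof
  interpret p1: pgrep S n A E by (rule P1)
  interpret p2: pgrep T n A' E by (rule P2)
  fix e assume e: "e \<in> mcl A E X"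
  then have eE: "e \<in> E" and sp: "A e \<in> vspan (A ` X)" by (auto simp: mcl_def)
  have eqX: "\<And>e. e \<in> X \<Longrightarrow> (\<lambda>j. \<sigma> (A e j)) = A' e" using A'A X by (auto simp: fun_eq_iff)
  have img: "(\<lambda>e j. \<sigma> (A e j)) ` X = A' ` X"
    by (rule image_cong) (use eqX in auto)
  have inj: "inj_on (\<lambda>e j. \<sigma> (A e j)) X"
    using p2.inj_Y[OF X] inj_on_cong[of X "\<lambda>e j. \<sigma> (A e j)" A'] eqX by simp
  have "(\<lambda>j. \<sigma> (A e j)) \<in> vspan ((\<lambda>e j. \<sigma> (A e j)) ` X)"
    by (rule fiso_span[OF S T iso p1.finY[OF X] p1.inj_Y[OF X] inj]) (use p1.AS X eE sp in auto)
  moreover have "(\<lambda>j. \<sigma> (A e j)) = A' e" using A'A eE by (auto simp: fun_eq_iff)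
  ultimately have "A' e \<in> vspan (A' ` X)" using img by simp
  then show "e \<in> mcl A' E X" using eE by (simp add: mcl_def)
qed


theorem lemma4p2:
  fixes q n :: nat and S :: "'a::field set" and A :: "'e \<Rightarrow> nat \<Rightarrow> 'a"
    and E L0 :: "'e set" and v :: "nat \<Rightarrow> 'a" and f :: 'e
    and vL :: "'e set \<Rightarrow> nat \<Rightarrow> 'a"
  assumes q: "\<exists>p k. prime p \<and> 0 < k \<and> q = p ^ k"
    and n: "3 \<le> n"
    and S: "subfield S" "card S = q"
    and E: "finite E" "is_PG_rep S n A E"
    and L0: "is_line A E L0"
    and v: "v \<in> vspan (A ` L0)" "\<forall>e\<in>L0. \<not> parallel v (A e)"
    and f: "f \<in> E - L0"
    and vL: "\<forall>L\<in>lines_off A E L0 f.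
               vL L \<noteq> (\<lambda>j. 0) \<and> vL L \<in> vspan (A ` L) \<and> vL L \<in> vspan {v, A f}"
  shows "\<forall>T :: 'b::field set. subfield T \<and> card T = q \<and> T \<noteq> UNIV \<longrightarrow>
           (\<exists>(\<phi> :: ('e + 'e set) \<Rightarrow> nat \<Rightarrow> 'b) m.
              (\<forall>x j. m \<le> j \<longrightarrow> \<phi> x j = 0) \<and>
              (\<forall>X \<subseteq> pgbar_ground E (lines_off A E L0 f).
                 lin_indep_fam (pgbar_cols A vL) X \<longleftrightarrow> lin_indep_fam \<phi> X))"
proof (intro allI impI)
  fix T :: "'b::field set"
  assume Tass: "subfield T \<and> card T = q \<and> T \<noteq> UNIV"
  then have T: "subfield T" "card T = q" "T \<noteq> UNIV" by auto
  obtain p k where pk: "prime p" "0 < k" "q = p ^ k" using q by blast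
  obtain \<sigma> where \<sigma>: "bij_betw \<sigma> S T" "\<sigma> 1 = 1"
    "\<forall>x\<in>S. \<forall>y\<in>S. \<sigma> (x + y) = \<sigma> x + \<sigma> y \<and> \<sigma> (x * y) = \<sigma> x * \<sigma> y"
    using finite_subfield_iso[OF S(1) S(2) T(1) T(2) pk(1) pk(3) pk(2)] by blast
  have iso: "fiso S T \<sigma>" using \<sigma> by (simp add: fiso_def)
  have iso': "fiso T S (inv_into S \<sigma>)" by (rule fiso_inv[OF S(1) T(1) iso])
  obtain a b where ab: "a \<in> E" "b \<in> E" "a \<noteq> b" "L0 = mcl A E {a, b}"
    using L0 by (auto simp: is_line_def)
  have fE: "f \<in> E" "f \<notin> L0" using f by auto
  have H1: "pgsetup S n A E L0 a b f v"
    by (intro pgsetup.intro pgrep.intro pgsetup_axioms.intro) (use S E ab fE v in auto)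
  interpret s1: pgsetup S n A E L0 a b f v by (rule H1)
  define A' where "A' e = (if e \<in> E then (\<lambda>j. \<sigma> (A e j)) else (\<lambda>j. 0))" for e
  have A'A: "\<forall>e\<in>E. \<forall>j. A' e j = \<sigma> (A e j)" by (simp add: A'_def)
  have AA': "\<forall>e\<in>E. \<forall>j. A e j = inv_into S \<sigma> (A' e j)"
    using A'A s1.AS \<sigma>(1) by (simp add: bij_betw_inv_into_left)
  note cS = subfield_closed[OF S(1)]
  note f0 = fiso_0[OF S(1) T(1) iso] and fin = fiso_in[OF S(1) T(1) iso]
    and feq0 = fiso_eq0[OF S(1) T(1) iso] and finj = fiso_inj[OF S(1) T(1) iso]
    and fmult = fiso_mult[OF S(1) T(1) iso] and fadd = fiso_add[OF S(1) T(1) iso]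
    and fdiv = fiso_divide[OF S(1) T(1) iso]
  note i0 = fiso_0[OF T(1) S(1) iso'] and iin = fiso_in[OF T(1) S(1) iso']
    and ieq0 = fiso_eq0[OF T(1) S(1) iso']
  have PG2: "is_PG_rep T n A' E"
    unfolding is_PG_rep_def
  proof (intro conjI ballI allI impI)
    fix e j assume e: "e \<in> E"
    show "A' e j \<in> T" using A'A e s1.AS fin by simp
    show "n \<le> j \<Longrightarrow> A' e j = 0" using A'A e s1.An f0 by simp
    show "A' e \<noteq> (\<lambda>j. 0)"
    proof
      assume "A' e = (\<lambda>j. 0)"
      then have "\<forall>j. A e j = 0" using A'A e feq0 s1.AS by (metis)
      then show False using s1.Anz[OF e] by auto
    qed
  next
    fix e e' assume e: "e \<in> E" "e' \<in> E" "e \<noteq> e'"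
    show "\<not> parallel (A' e) (A' e')"
    proof
      assume "parallel (A' e) (A' e')"
      then obtain c where c: "\<forall>j. A' e j = c * A' e' j" unfolding parallel_def by (auto simp: fun_eq_iff)
      obtain j0 where j0: "A e' j0 \<noteq> 0" using s1.Anz[OF e(2)] by auto
      define c0 where "c0 = A e j0 / A e' j0"
      have c0S: "c0 \<in> S" using s1.AS e cS by (simp add: c0_def)
      have sne: "\<sigma> (A e' j0) \<noteq> 0" using feq0 s1.AS e(2) j0 by simp
      have "c = \<sigma> (A e j0) / \<sigma> (A e' j0)" using c[rule_format, of j0] A'A e sne by (simp add: field_simps)
      then have cc: "c = \<sigma> c0" using fdiv s1.AS e by (simp add: c0_def)
      have "\<forall>j. A e j = c0 * A e' j"
      proof
        fix j
        have "\<sigma> (A e j) = \<sigma> (c0 * A e' j)" using c[rule_format, of j] A'A e cc fmult c0S s1.AS by simp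
        then show "A e j = c0 * A e' j" using finj s1.AS e c0S cS by simp
      qed
      then have "parallel (A e) (A e')" unfolding parallel_def by (intro exI[of _ c0]) (simp add: fun_eq_iff)
      then show False using s1.Anp e by blast
    qed
  next
    fix w :: "nat \<Rightarrow> 'b"
    assume w: "(\<forall>j. w j \<in> T) \<and> (\<forall>j. n \<le> j \<longrightarrow> w j = 0) \<and> w \<noteq> (\<lambda>j. 0)"
    define w' where "w' j = inv_into S \<sigma> (w j)" for j
    have w'S: "\<forall>j. w' j \<in> S" using w iin by (simp add: w'_def)
    have w'n: "\<forall>j. n \<le> j \<longrightarrow> w' j = 0" using w i0 by (simp add: w'_def)
    have w'nz: "w' \<noteq> (\<lambda>j. 0)"
    proof
      assume "w' = (\<lambda>j. 0)"
      then have "\<forall>j. w j = 0" using w ieq0 by (metis w'_def)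
      then show False using w by auto
    qed
    obtain e \<kappa> where e: "e \<in> E" "\<kappa> \<noteq> 0" "\<forall>j. w' j = \<kappa> * A e j" using s1.Apt'[OF w'S w'n w'nz] by blast
    obtain j1 where j1: "A e j1 \<noteq> 0" using s1.Anz[OF e(1)] by auto
    have kS: "\<kappa> \<in> S"
    proof -
      have "\<kappa> = w' j1 / A e j1" using e(3) j1 by simp
      then show ?thesis using w'S s1.AS e(1) cS by simp
    qed
    have "\<forall>j. w j = \<sigma> \<kappa> * A' e j"
    proof
      fix j
      have "w j = \<sigma> (w' j)" using w \<sigma>(1) by (simp add: w'_def bij_betw_inv_into_right)
      also have "\<dots> = \<sigma> \<kappa> * \<sigma> (A e j)" using e(3) fmult kS s1.AS e(1) by simp
      finally show "w j = \<sigma> \<kappa> * A' e j" using A'A e(1) by simp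
    qed
    then have "parallel w (A' e)" unfolding parallel_def by (intro exI[of _ "\<sigma> \<kappa>"]) (simp add: fun_eq_iff)
    then show "\<exists>e\<in>E. parallel w (A' e)" using e(1) by blast
  qed
  have P2: "pgrep T n A' E" by (intro pgrep.intro T(1) E(1) PG2)
  interpret p2: pgrep T n A' E by (rule P2)
  have mcl_eq: "mcl A E X = mcl A' E X" if X: "X \<subseteq> E" for X
  proof
    show "mcl A E X \<subseteq> mcl A' E X" by (rule mcl_transfer[OF S(1) T(1) iso s1.pgrep_axioms P2 A'A X])
    show "mcl A' E X \<subseteq> mcl A E X" by (rule mcl_transfer[OF T(1) S(1) iso' P2 s1.pgrep_axioms AA' X])
  qed
  have L0E: "L0 \<subseteq> E" using ab(4) s1.mcl_sub by simp
  have lines_eq: "lines_off A' E L0 f = lines_off A E L0 f"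
  proof -
    have "is_line A' E L \<longleftrightarrow> is_line A E L" for L
      unfolding is_line_def using mcl_eq by (metis empty_subsetI insert_subset)
    moreover have "mcl A' E (L0 \<union> {f}) = mcl A E (L0 \<union> {f})" using mcl_eq L0E fE by simp
    ultimately show ?thesis unfolding lines_off_def by simp
  qed
  have L0': "L0 = mcl A' E {a, b}" using ab mcl_eq by simp
  obtain u where u: "u \<notin> T" using T(3) by blast
  define v' where "v' j = A' a j + u * A' b j" for j
  have v'sp: "v' \<in> vspan (A' ` L0)"
  proof -
    have fin': "finite (A' ` L0)" using L0E E(1) finite_subset by blast
    have "A' a \<in> vspan (A' ` L0)" "A' b \<in> vspan (A' ` L0)"
      using s1.aL0 fin' by (auto intro: vspan_mem)
    from vspan_lin[OF this, of 1 u] show ?thesis by (simp add: v'_def[abs_def])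
  qed
  have v'np: "\<forall>e\<in>L0. \<not> parallel v' (A' e)"
  proof (intro ballI notI)
    fix e assume e: "e \<in> L0" and par: "parallel v' (A' e)"
    have eE: "e \<in> E" using e L0E by auto
    obtain x y where xy: "\<forall>j. A e j = x * A a j + y * A b j"
      using e unfolding ab(4) s1.mcl_two by blast
    have co: "\<forall>j. A e j = x * A a j + y * A b j + 0 * A f j" using xy by simp
    have wS: "\<forall>j. A e j \<in> S" using s1.AS eE by simp
    from s1.S_coords[OF wS co] have xyS: "x \<in> S" "y \<in> S" by auto
    have A'e: "\<forall>j. A' e j = \<sigma> x * A' a j + \<sigma> y * A' b j"
    proof
      fix j
      have "A' e j = \<sigma> (x * A a j + y * A b j)" using A'A eE xy by simp
      also have "\<dots> = \<sigma> x * \<sigma> (A a j) + \<sigma> y * \<sigma> (A b j)"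
        using fadd fmult xyS s1.AS ab cS by simp
      finally show "A' e j = \<sigma> x * A' a j + \<sigma> y * A' b j" using A'A ab by simp
    qed
    obtain c where c: "\<forall>j. v' j = c * A' e j" using par unfolding parallel_def by (auto simp: fun_eq_iff)
    have "\<forall>j. (1 - c * \<sigma> x) * A' a j + (u - c * \<sigma> y) * A' b j = 0"
      using c A'e by (simp add: v'_def algebra_simps)
    then have z: "1 - c * \<sigma> x = 0" "u - c * \<sigma> y = 0" using p2.indep2[OF ab(1-3)] by blast+
    then have sx: "\<sigma> x \<noteq> 0" by auto
    then have x0: "x \<noteq> 0" using f0 by auto
    have "u = \<sigma> y / \<sigma> x" using z sx by (simp add: field_simps)
    also have "\<dots> = \<sigma> (y / x)" using fdiv xyS by simp
    finally have "u \<in> T" using fin xyS cS by simp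
    then show False using u by simp
  qed
  have H2: "pgsetup T n A' E L0 a b f v'"
    by (intro pgsetup.intro P2 pgsetup_axioms.intro) (use ab L0' fE v'sp v'np in auto)
  interpret s2: pgsetup T n A' E L0 a b f v' by (rule H2)
  define Ls where "Ls = lines_off A E L0 f"
  define w where "w L = (if L \<in> Ls then (SOME x. x \<noteq> (\<lambda>j. 0) \<and> x \<in> vspan (A' ` L) \<and> x \<in> vspan {v', A' f})
                         else (\<lambda>j. 0))" for L
  have wprop: "w L \<noteq> (\<lambda>j. 0) \<and> w L \<in> vspan (A' ` L) \<and> w L \<in> vspan {v', A' f}" if L: "L \<in> Ls" for L
  proof -
    have "L \<in> lines_off A' E L0 f" using L lines_eq by (simp add: Ls_def)
    then have ex: "\<exists>x. x \<noteq> (\<lambda>j. 0) \<and> x \<in> vspan (A' ` L) \<and> x \<in> vspan {v', A' f}"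
      by (rule s2.exists_vL)
    show ?thesis unfolding w_def using L someI_ex[OF ex] by simp
  qed
  have fw: "twosetup S n A E L0 a b f v T A' v' \<sigma> vL w"
    by (intro twosetup.intro H1 H2 twosetup_axioms.intro iso A'A)
      (use vL wprop Ls_def in auto)
  have bw: "twosetup T n A' E L0 a b f v' S A v (inv_into S \<sigma>) w vL"
    by (intro twosetup.intro H1 H2 twosetup_axioms.intro iso' AA')
      (use vL wprop Ls_def lines_eq in auto)
  show "\<exists>(\<phi> :: ('e + 'e set) \<Rightarrow> nat \<Rightarrow> 'b) m.
              (\<forall>x j. m \<le> j \<longrightarrow> \<phi> x j = 0) \<and>
              (\<forall>X \<subseteq> pgbar_ground E (lines_off A E L0 f).
                 lin_indep_fam (pgbar_cols A vL) X \<longleftrightarrow> lin_indep_fam \<phi> X)"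
  proof (intro exI[of _ "pgbar_cols A' w"] exI[of _ n] conjI allI impI)
    fix x j assume j: "n \<le> j"
    show "pgbar_cols A' w x j = 0"
    proof (cases x)
      case (Inl e)
      then show ?thesis using j s1.An f0 by (simp add: pgbar_cols_def A'_def)
    next
      case (Inr L)
      show ?thesis
      proof (cases "L \<in> Ls")
        case True
        have wl: "w L \<in> vspan {v', A' f}" using wprop[OF True] by simp
        have z1: "\<forall>j. n \<le> j \<longrightarrow> v' j = 0" using p2.An ab by (simp add: v'_def)
        have z2: "\<forall>j. n \<le> j \<longrightarrow> A' f j = 0" using p2.An fE by simp
        have zz: "\<forall>z\<in>{v', A' f}. \<forall>j. n \<le> j \<longrightarrow> z j = 0" using z1 z2 by blast
        have "w L j = 0" by (rule p2.span_zero_n[OF _ zz wl j]) simp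
        then show ?thesis using Inr by (simp add: pgbar_cols_def)
      next
        case False
        then show ?thesis using Inr by (simp add: pgbar_cols_def w_def)
      qed
    qed
  next
    fix X assume X: "X \<subseteq> pgbar_ground E (lines_off A E L0 f)"
    show "lin_indep_fam (pgbar_cols A vL) X \<longleftrightarrow> lin_indep_fam (pgbar_cols A' w) X"
    proof
      assume i1: "lin_indep_fam (pgbar_cols A vL) X"
      show "lin_indep_fam (pgbar_cols A' w) X"
      proof (rule ccontr)
        assume "\<not> lin_indep_fam (pgbar_cols A' w) X"
        moreover have "X \<subseteq> pgbar_ground E (lines_off A' E L0 f)" using X lines_eq by simp
        ultimately have "\<not> lin_indep_fam (pgbar_cols A vL) X"
          using twosetup.transfer_main[OF bw] by blast
        then show False using i1 by simp
      qed
    next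
      assume i2: "lin_indep_fam (pgbar_cols A' w) X"
      show "lin_indep_fam (pgbar_cols A vL) X"
      proof (rule ccontr)
        assume "\<not> lin_indep_fam (pgbar_cols A vL) X"
        then have "\<not> lin_indep_fam (pgbar_cols A' w) X"
          using twosetup.transfer_main[OF fw X] by blast
        then show False using i2 by simp
      qed
    qed
  qed
qed


end
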